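(* Let $N\ge1$, $\underline s=(s_1,\dots,s_N)\in\mathbb{Z}^N$, $\underline m=(m_1,\dots,m_N)\in\mathbb{N}^N$ with $m_1=0$, $\underline j=(j_1,\dots,j_N)\in\mathbb{N}^N$, and complex $\underline z=(z_1,\dots,z_N)$ with $|z_1|>1$, $|z_i|\ge1$ for $i\ge2$. (i) One has $$\mathrm{B}_N\!\left[\begin{smallmatrix}\underline s\\ \underline m\\ \underline j\end{smallmatrix}\Big|\underline z\right]=(z_1^{j_1}\cdots z_N^{j_N})\,\mathrm{La}_{s_1,\dots,s_N}(1/z_1,\dots,1/z_N)-\sum_{p=1}^N(z_p^{j_p}\cdots z_N^{j_N})\,Q_{N,p}(j_p;z_p,\dots,z_N)\,\mathrm{B}_{p-1}\!\left[\begin{smallmatrix}s_1,\dots,s_{p-1}\\ m_1,\dots,m_{p-1}\\ j_1,\dots,j_{p-1}\end{smallmatrix}\Big|z_1,\dots,z_{p-1}\right]+\sum_{p=2}^N\varepsilon_p\,(z_p^{j_p}\cdots z_N^{j_N})\sum_{k=t_p+1}^{T_p}z_p^{-k}R_{N,p}(k).$$ (ii) For every $p$ with $2\le p\le N$ and every integer $K\ge0$, $R_{N,p}(K)$ is a term of depth $\le N-1$, of weight $\le\sum_{i=1}^N\max(s_i,0)$.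
   Context: For $r\ge1$, $\underline s\in\mathbb{Z}^r$, $\underline m\in\mathbb{N}^r$ with $m_1=0$, $\underline j\in\mathbb{N}^r$ and complex $w_1,\dots,w_r$ with $|w_1|>1$, $|w_i|\ge1$, the (shifted-modulated) brick is $\mathrm{B}_r\!\left[\begin{smallmatrix}\underline s\\ \underline m\\ \underline j\end{smallmatrix}\Big|\underline w\right]=\sum\frac{w_1^{-k_1}\cdots w_r^{-k_r}}{(k_1+j_1)^{s_1}\cdots(k_r+j_r)^{s_r}}$, the sum being over integers with $k_1\ge1$ and $1\le k_i\le k_{i-1}+m_i$ for $2\le i\le r$; $\mathrm{B}_0=1$. Its depth is $r$ and its weight is $\sum_i\max(s_i,0)$. $\mathrm{La}_{s_1,\dots,s_N}(w_1,\dots,w_N)=\sum_{k_1\ge\cdots\ge k_N\ge1}\frac{w_1^{k_1}\cdots w_N^{k_N}}{k_1^{s_1}\cdots k_N^{s_N}}$. For $1\le p\le N$ and $K\ge0$, $Q_{N,p}(K;z_p,\dots,z_N)=\sum_{K\ge k_p\ge\cdots\ge k_N\ge1}\prod_{i=p}^Nz_i^{-k_i}k_i^{-s_i}$ (equal to $0$ if $K=0$), and $Q_{N,N+1}=1$. For integers $a,b$: $\varepsilon_{a,b}=1$ if $a<b$, $-1$ if $a>b$, $0$ if $a=b$; for $2\le p\le N$: $\varepsilon_p=\varepsilon_{j_{p-1},j_p+m_p}$, $t_p=\min(j_{p-1},j_p+m_p)$, $T_p=\max(j_{p-1},j_p+m_p)$. For $2\le p\le N$ and $K\ge0$, $R_{N,p}(K)=\sum\frac{z_1^{-k_1}\cdots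 z_{p-2}^{-k_{p-2}}(z_{p-1}z_p)^{-k_{p-1}}}{\big(\prod_{i=1}^{p-1}(k_i+j_i)^{s_i}\big)(k_{p-1}+K)^{s_p}}\,Q_{N,p+1}(k_{p-1}+K;z_{p+1},\dots,z_N)$, summed over $k_1\ge1$ and $1\le k_i\le k_{i-1}+m_i$ ($2\le i\le p-1$) (for $p=2$ the factor $z_1^{-k_1}\cdots z_{p-2}^{-k_{p-2}}$ is $1$). A term of depth $\le N-1$ is a finite linear combination, with coefficients in $\mathbb{Q}[z_1^{\pm1},\dots,z_N^{\pm1}]$, of bricks $\mathrm{B}_r[\cdots|w_1,\dots,w_r]$ with $0\le r\le N-1$ (arbitrary integer exponents, nonnegative modulations with first modulation $0$, nonnegative shifts) where each $w_i$ is a product of some of the $z_1,\dots,z_N$; its weight is the maximum of the weights of the bricks in it. *)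

theory Defs
  imports "HOL-Analysis.Analysis"
begin

text \<open>All tuples are functions on nat, only indices 1..r (resp. p..N) matter.\<close>

definition brick_idx :: "nat \<Rightarrow> (nat \<Rightarrow> nat) \<Rightarrow> (nat \<Rightarrow> nat) set" where
  "brick_idx r m = {k. (\<forall>i\<in>{1..r}. 1 \<le> k i) \<and> (\<forall>i\<in>{2..r}. k i \<le> k (i - 1) + m i)
                       \<and> (\<forall>i. i \<notin> {1..r} \<longrightarrow> k i = 0)}"

definition Brick :: "nat \<Rightarrow> (nat \<Rightarrow> int) \<Rightarrow> (nat \<Rightarrow> nat) \<Rightarrow> (nat \<Rightarrow> nat) \<Rightarrow> (nat \<Rightarrow> complex) \<Rightarrow> complex" where
  "Brick r s m j w =
     (\<Sum>\<^sub>\<infinity>k\<in>brick_idx r m.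
        \<Prod>i\<in>{1..r}. inverse (w i ^ k i * (of_nat (k i + j i)) powi (s i)))"

definition La :: "nat \<Rightarrow> (nat \<Rightarrow> int) \<Rightarrow> (nat \<Rightarrow> complex) \<Rightarrow> complex" where
  "La N s w =
     (\<Sum>\<^sub>\<infinity>k\<in>{k. (\<forall>i\<in>{1..N}. 1 \<le> k i) \<and> (\<forall>i\<in>{1..<N}. k (i + 1) \<le> k i)
                 \<and> (\<forall>i. i \<notin> {1..N} \<longrightarrow> k i = 0)}.
        \<Prod>i\<in>{1..N}. w i ^ k i / (of_nat (k i)) powi (s i))"

text \<open>Q_{N,p}(K; z_p..z_N); for p = N+1 this is the empty product 1.\<close>
definition Qf :: "nat \<Rightarrow> nat \<Rightarrow> (nat \<Rightarrow> int) \<Rightarrow> nat \<Rightarrow> (nat \<Rightarrow> complex) \<Rightarrow> complex" where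
  "Qf N p s K z =
     (\<Sum>k\<in>{k. (p \<le> N \<longrightarrow> k p \<le> K) \<and> (\<forall>i\<in>{p..N}. 1 \<le> k i) \<and> (\<forall>i\<in>{p..<N}. k (i + 1) \<le> k i)
              \<and> (\<forall>i. i \<notin> {p..N} \<longrightarrow> k i = 0)}.
        \<Prod>i\<in>{p..N}. inverse (z i ^ k i * (of_nat (k i)) powi (s i)))"

definition Rf :: "nat \<Rightarrow> nat \<Rightarrow> (nat \<Rightarrow> int) \<Rightarrow> (nat \<Rightarrow> nat) \<Rightarrow> (nat \<Rightarrow> nat)
                   \<Rightarrow> (nat \<Rightarrow> complex) \<Rightarrow> nat \<Rightarrow> complex" where
  "Rf N p s m j z K =
     (\<Sum>\<^sub>\<infinity>k\<in>brick_idx (p - 1) m.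
        (\<Prod>i\<in>{1..p-2}. inverse (z i ^ k i))
        * inverse ((z (p - 1) * z p) ^ k (p - 1))
        * inverse ((\<Prod>i\<in>{1..p-1}. (of_nat (k i + j i)) powi (s i))
                   * (of_nat (k (p - 1) + K)) powi (s p))
        * Qf N (p + 1) s (k (p - 1) + K) z)"

definition eps :: "int \<Rightarrow> int \<Rightarrow> int" where
  "eps a b = (if a < b then 1 else if a > b then -1 else 0)"

definition zdom :: "nat \<Rightarrow> (nat \<Rightarrow> complex) set" where
  "zdom N = {z. cmod (z 1) > 1 \<and> (\<forall>i\<in>{2..N}. cmod (z i) \<ge> 1)}"

text \<open>Laurent polynomials in Q[z_1^{+-1},..,z_N^{+-1}], represented as finite lists of
  (rational coefficient, integer exponent vector), and their evaluation.\<close>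
type_synonym laurent = "(rat \<times> (nat \<Rightarrow> int)) list"

definition lp_eval :: "nat \<Rightarrow> laurent \<Rightarrow> (nat \<Rightarrow> complex) \<Rightarrow> complex" where
  "lp_eval N c z = (\<Sum>(a, e)\<leftarrow>c. of_rat a * (\<Prod>i\<in>{1..N}. z i powi e i))"

text \<open>A brick descriptor: depth r, exponents, modulations, shifts, and for each
  position i the set S_i of indices with w_i = prod_{l in S_i} z_l.\<close>
type_synonym brick_desc = "nat \<times> (nat \<Rightarrow> int) \<times> (nat \<Rightarrow> nat) \<times> (nat \<Rightarrow> nat) \<times> (nat \<Rightarrow> nat set)"

type_synonym bterm = "(laurent \<times> brick_desc) list"

definition bd_vars :: "brick_desc \<Rightarrow> (nat \<Rightarrow> complex) \<Rightarrow> (nat \<Rightarrow> complex)" where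
  "bd_vars b z = (case b of (r, s, m, j, S) \<Rightarrow> (\<lambda>i. \<Prod>l\<in>S i. z l))"

definition bd_weight :: "brick_desc \<Rightarrow> int" where
  "bd_weight b = (case b of (r, s, m, j, S) \<Rightarrow> (\<Sum>i\<in>{1..r}. max (s i) 0))"

definition bd_ok :: "nat \<Rightarrow> brick_desc \<Rightarrow> bool" where
  "bd_ok N b = (case b of (r, s, m, j, S) \<Rightarrow>
      r \<le> N - 1 \<and> (1 \<le> r \<longrightarrow> m 1 = 0) \<and> (\<forall>i\<in>{1..r}. S i \<subseteq> {1..N}))"

definition bd_defined :: "brick_desc \<Rightarrow> (nat \<Rightarrow> complex) \<Rightarrow> bool" where
  "bd_defined b z = (case b of (r, s, m, j, S) \<Rightarrow>
      (1 \<le> r \<longrightarrow> cmod (bd_vars b z 1) > 1) \<and> (\<forall>i\<in>{1..r}. cmod (bd_vars b z i) \<ge> 1))"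

definition bd_eval :: "brick_desc \<Rightarrow> (nat \<Rightarrow> complex) \<Rightarrow> complex" where
  "bd_eval b z = (case b of (r, s, m, j, S) \<Rightarrow> Brick r s m j (bd_vars b z))"

definition term_eval :: "nat \<Rightarrow> bterm \<Rightarrow> (nat \<Rightarrow> complex) \<Rightarrow> complex" where
  "term_eval N T z = (\<Sum>(c, b)\<leftarrow>T. lp_eval N c z * bd_eval b z)"

definition is_term_repr :: "nat \<Rightarrow> int \<Rightarrow> bterm \<Rightarrow> ((nat \<Rightarrow> complex) \<Rightarrow> complex) \<Rightarrow> bool" where
  "is_term_repr N W T F =
     ((\<forall>(c, b)\<in>set T. bd_ok N b \<and> bd_weight b \<le> W) \<and>
      (\<forall>z\<in>zdom N. (\<forall>(c, b)\<in>set T. bd_defined b z) \<and> F z = term_eval N T z))"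

end

theory Submission
  imports Defs "HOL-Real_Asymp.Real_Asymp"
begin


lemma poly_geom_summable:
  fixes q E :: real
  assumes "0 < q" "q < 1"
  shows "summable (\<lambda>n::nat. (real n + E)^B * q^n)"
proof -
  define r where "r = sqrt q"
  have r: "0 < r" "r < 1" using assms by (auto simp: r_def)
  have rq: "r * r = q" using assms by (simp add: r_def)
  have lim: "(\<lambda>n::nat. (real n + E)^B * r^n) \<longlonglongrightarrow> 0" using r by real_asymp
  have "eventually (\<lambda>n. norm ((real n + E)^B * r^n) < 1) sequentially"
    using order_tendstoD(2)[OF tendsto_rabs_zero[OF lim] zero_less_one] by simp
  then have ev: "eventually (\<lambda>n. norm ((real n + E)^B * q^n) \<le> r^n) sequentially"
  proof (rule eventually_mono)
    fix n assume a: "norm ((real n + E)^B * r^n) < 1"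
    have "(real n + E)^B * q^n = ((real n + E)^B * r^n) * r^n"
      by (simp add: rq[symmetric] power_mult_distrib)
    then have "norm ((real n + E)^B * q^n) = norm ((real n + E)^B * r^n) * r^n"
      using r assms(1) by (simp add: abs_mult)
    also have "\<dots> \<le> 1 * r^n" using a r by (intro mult_right_mono) auto
    finally show "norm ((real n + E)^B * q^n) \<le> r^n" by simp
  qed
  show ?thesis
    by (rule summable_comparison_test_ev[OF ev]) (use r in \<open>auto intro!: summable_geometric\<close>)
qed

definition box :: "nat \<Rightarrow> nat \<Rightarrow> (nat \<Rightarrow> nat) set" where
  "box r a = {k. (\<forall>i. i \<notin> {1..r} \<longrightarrow> k i = 0) \<and> (\<forall>i\<in>{1..r}. k i \<le> a)}"

lemma box_image: "box r a \<subseteq> (\<lambda>f i. if i \<in> {1..r} then f i else 0) ` (PiE {1..r} (\<lambda>_. {0..a}))"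
proof
  fix k assume k: "k \<in> box r a"
  have "k = (\<lambda>i. if i \<in> {1..r} then restrict k {1..r} i else 0)"
    using k by (auto simp: box_def)
  moreover have "restrict k {1..r} \<in> PiE {1..r} (\<lambda>_. {0..a})" using k by (auto simp: box_def)
  ultimately show "k \<in> (\<lambda>f i. if i \<in> {1..r} then f i else 0) ` (PiE {1..r} (\<lambda>_. {0..a}))"
    by blast
qed

lemma box_finite: "finite (box r a)"
  by (rule finite_subset[OF box_image]) (auto intro!: finite_PiE)

lemma box_card: "card (box r a) \<le> (a + 1) ^ r"
proof -
  have "card (box r a) \<le> card ((\<lambda>f i. if i \<in> {1..r} then f i else 0) ` (PiE {1..r} (\<lambda>_. {0..a})))"
    by (rule card_mono[OF _ box_image]) (auto intro!: finite_PiE)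
  also have "\<dots> \<le> card (PiE {1..r} (\<lambda>_. {0..a::nat}))" by (rule card_image_le) (auto intro!: finite_PiE)
  also have "\<dots> = (a + 1) ^ r" by (simp add: card_PiE)
  finally show ?thesis .
qed

lemma chain_bound:
  fixes k :: "nat \<Rightarrow> nat"
  assumes "\<forall>i\<in>{2..r}. k i \<le> k (i - 1) + c i" "i \<in> {1..r}"
  shows "k i \<le> k 1 + (\<Sum>l\<in>{1..r}. c l)"
proof -
  have "k i \<le> k 1 + (\<Sum>l\<in>{2..i}. c l)" using assms(2)
  proof (induction i)
    case 0 then show ?case by simp
  next
    case (Suc i)
    show ?case
    proof (cases "i = 0")
      case True then show ?thesis by simp
    next
      case False
      then have "Suc i \<in> {2..r}" using Suc.prems by auto
      then have "k (Suc i) \<le> k i + c (Suc i)" using assms(1) by fastforce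
      moreover have "k i \<le> k 1 + (\<Sum>l\<in>{2..i}. c l)" using Suc False by auto
      moreover have "(\<Sum>l\<in>{2..Suc i}. c l) = (\<Sum>l\<in>{2..i}. c l) + c (Suc i)"
        using False by (simp add: sum.cl_ivl_Suc)
      ultimately show ?thesis by simp
    qed
  qed
  also have "(\<Sum>l\<in>{2..i}. c l) \<le> (\<Sum>l\<in>{1..r}. c l)"
    using assms(2) by (intro sum_mono2) auto
  finally show ?thesis by simp
qed

lemma prod_summable:
  fixes \<phi> :: "nat \<Rightarrow> nat \<Rightarrow> complex" and q D :: real
  assumes r: "r \<ge> 1" and q: "0 < q" "q < 1" and D: "D \<ge> 0"
    and A: "\<And>k i. k \<in> A \<Longrightarrow> (i \<notin> {1..r} \<longrightarrow> k i = 0) \<and> (i \<in> {1..r} \<longrightarrow> 1 \<le> k i \<and> k i \<le> k 1 + M)"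
    and bnd: "\<And>i x. i \<in> {1..r} \<Longrightarrow> x \<ge> 1 \<Longrightarrow> norm (\<phi> i x) \<le> (real x + D)^B * (if i = 1 then q^x else 1)"
  shows "(\<lambda>k. \<Prod>i\<in>{1..r}. \<phi> i (k i)) summable_on A"
proof -
  define H where "H a = (real a + real M + D)^(B*r) * q^a" for a :: nat
  define H2 where "H2 a = (real a + (real M + D + 1))^(r + B*r) * q^a" for a :: nat
  have H0: "H a \<ge> 0" for a using q D by (simp add: H_def)
  have kb: "norm (\<Prod>i\<in>{1..r}. \<phi> i (k i)) \<le> H (k 1)" if k: "k \<in> A" for k
  proof -
    have "norm (\<Prod>i\<in>{1..r}. \<phi> i (k i)) = (\<Prod>i\<in>{1..r}. norm (\<phi> i (k i)))"
      by (simp add: prod_norm)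
    also have "\<dots> \<le> (\<Prod>i\<in>{1..r}. (real (k 1) + real M + D)^B * (if i = 1 then q^(k 1) else 1))"
    proof (rule prod_mono, safe)
      fix i assume i: "i \<in> {1..r}"
      show "0 \<le> norm (\<phi> i (k i))" by simp
      have ki: "1 \<le> k i" "k i \<le> k 1 + M" using A[OF k, of i] i by auto
      have "norm (\<phi> i (k i)) \<le> (real (k i) + D)^B * (if i = 1 then q^(k i) else 1)"
        using bnd[OF i ki(1)] .
      also have "\<dots> \<le> (real (k 1) + real M + D)^B * (if i = 1 then q^(k 1) else 1)"
        using ki q D by (intro mult_mono power_mono) auto
      finally show "norm (\<phi> i (k i)) \<le> (real (k 1) + real M + D)^B * (if i = 1 then q^(k 1) else 1)" .
    qed
    also have "\<dots> = (real (k 1) + real M + D)^(B*r) * (\<Prod>i\<in>{1..r}. (if i = 1 then q^(k 1) else 1))"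
      by (simp add: prod.distrib power_mult)
    also have "(\<Prod>i\<in>{1..r}. (if i = 1 then q^(k 1) else 1)) = q^(k 1)"
      using r by (simp add: prod.If_cases)
    finally show ?thesis by (simp add: H_def)
  qed
  have H2s: "summable H2" unfolding H2_def using q by (rule poly_geom_summable)
  have HH2: "real (card (box r (a + M))) * H a \<le> H2 a" for a
  proof -
    have "real (card (box r (a + M))) \<le> (real a + real M + 1)^r"
      using box_card[of r "a+M"] by (metis of_nat_1 of_nat_add of_nat_le_iff of_nat_power)
    also have "\<dots> \<le> (real a + (real M + D + 1))^r" using D by (intro power_mono) auto
    finally have c: "real (card (box r (a + M))) \<le> (real a + (real M + D + 1))^r" .
    have "real (card (box r (a + M))) * H a \<le> (real a + (real M + D + 1))^r * ((real a + (real M + D + 1))^(B*r) * q^a)"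
      unfolding H_def using q D by (intro mult_mono c mult_right_mono power_mono) auto
    then show ?thesis by (simp add: H2_def power_add mult.assoc)
  qed
  have "(\<lambda>k. norm (\<Prod>i\<in>{1..r}. \<phi> i (k i))) summable_on A"
  proof (rule nonneg_bdd_above_summable_on)
    show "bdd_above (sum (\<lambda>k. norm (\<Prod>i\<in>{1..r}. \<phi> i (k i))) ` {F. F \<subseteq> A \<and> finite F})"
    proof (rule bdd_aboveI2)
      fix F assume F: "F \<in> {F. F \<subseteq> A \<and> finite F}"
      have "(\<Sum>k\<in>F. norm (\<Prod>i\<in>{1..r}. \<phi> i (k i))) \<le> (\<Sum>k\<in>F. H (k 1))"
        using F kb by (intro sum_mono) auto
      also have "\<dots> = (\<Sum>a\<in>(\<lambda>k. k 1) ` F. (\<Sum>k\<in>{k\<in>F. k 1 = a}. H (k 1)))"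
        by (rule sum.image_gen) (use F in blast)
      also have "\<dots> = (\<Sum>a\<in>(\<lambda>k. k 1) ` F. real (card {k\<in>F. k 1 = a}) * H a)"
        by (intro sum.cong) auto
      also have "\<dots> \<le> (\<Sum>a\<in>(\<lambda>k. k 1) ` F. H2 a)"
      proof (rule sum_mono)
        fix a assume "a \<in> (\<lambda>k. k 1) ` F"
        have "{k\<in>F. k 1 = a} \<subseteq> box r (a + M)"
          using F A by (fastforce simp: box_def)
        then have "card {k\<in>F. k 1 = a} \<le> card (box r (a + M))"
          by (intro card_mono box_finite)
        then have "real (card {k\<in>F. k 1 = a}) * H a \<le> real (card (box r (a + M))) * H a"
          using H0 by (intro mult_right_mono) auto
        then show "real (card {k\<in>F. k 1 = a}) * H a \<le> H2 a" using HH2 by (meson order_trans)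
      qed
      also have "\<dots> \<le> suminf H2"
        by (rule sum_le_suminf[OF H2s]) (use F q D in \<open>auto simp: H2_def\<close>)
      finally show "(\<Sum>k\<in>F. norm (\<Prod>i\<in>{1..r}. \<phi> i (k i))) \<le> suminf H2" .
    qed
  qed auto
  then show ?thesis by (rule abs_summable_summable)
qed



lemma powi_inv_bound:
  assumes "(a::nat) \<ge> 1"
  shows "norm (inverse ((of_nat a :: complex) powi s)) \<le> real a ^ nat \<bar>s\<bar>"
proof -
  have "norm (inverse ((of_nat a :: complex) powi s)) = inverse (real a powi s)"
    by (simp add: norm_inverse norm_power_int)
  also have "\<dots> = real a powi (-s)" by (simp add: power_int_minus)
  also have "\<dots> \<le> real a ^ nat \<bar>s\<bar>"
  proof (cases "s \<ge> 0")
    case True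
    then have "real a powi (-s) = inverse (real a ^ nat s)"
      by (metis int_nat_eq power_int_minus power_int_of_nat)
    also have "\<dots> \<le> 1" using assms by (simp add: inverse_le_1_iff one_le_power)
    also have "1 \<le> real a ^ nat \<bar>s\<bar>" using assms by (simp add: one_le_power)
    finally show ?thesis .
  next
    case False
    then have "-s = int (nat \<bar>s\<bar>)" by simp
    then show ?thesis by (metis order.refl power_int_of_nat)
  qed
  finally show ?thesis .
qed

lemma factor_bound:
  assumes "(x::nat) \<ge> 1" "cmod w \<ge> 1"
  shows "norm (inverse (w^x * (of_nat (x+a) :: complex) powi s)) \<le> (real x + real a)^nat \<bar>s\<bar> * inverse (cmod w)^x"
proof -
  have "norm (inverse (w^x * (of_nat (x+a) :: complex) powi s)) = inverse (cmod w)^x * norm (inverse ((of_nat (x+a) :: complex) powi s))"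
    by (simp add: norm_inverse norm_mult norm_power power_inverse)
  also have "\<dots> \<le> inverse (cmod w)^x * (real (x + a))^nat \<bar>s\<bar>"
    using assms by (intro mult_left_mono powi_inv_bound) auto
  finally show ?thesis by (simp add: mult.commute)
qed

lemma pow_weaken:
  assumes "(x::nat) \<ge> 1" "real a \<le> D" "e \<le> B"
  shows "(real x + real a)^e \<le> (real x + D)^B"
proof -
  have "(real x + real a)^e \<le> (real x + real a)^B" using assms by (intro power_increasing) auto
  also have "\<dots> \<le> (real x + D)^B" using assms by (intro power_mono) auto
  finally show ?thesis .
qed

lemma merge:
  fixes f h :: "_ \<Rightarrow> complex" and F :: "_ \<Rightarrow> complex"
  assumes phi: "\<And>a b. a \<in> A \<Longrightarrow> b \<in> B a \<Longrightarrow> \<phi> (a, b) \<in> C"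
    and psi: "\<And>c. c \<in> C \<Longrightarrow> \<psi> c \<in> Sigma A B"
    and pp: "\<And>a b. a \<in> A \<Longrightarrow> b \<in> B a \<Longrightarrow> \<psi> (\<phi> (a, b)) = (a, b)"
    and pp2: "\<And>c. c \<in> C \<Longrightarrow> \<phi> (\<psi> c) = c"
    and fin: "\<And>a. a \<in> A \<Longrightarrow> finite (B a)"
    and eq: "\<And>a b. a \<in> A \<Longrightarrow> b \<in> B a \<Longrightarrow> F (\<phi> (a, b)) = f a * h b"
    and summ: "F summable_on C"
  shows "infsum (\<lambda>a. f a * sum h (B a)) A = infsum F C"
proof -
  have s1: "(\<lambda>x. F (\<phi> x)) summable_on Sigma A B"
    using summable_on_reindex_bij_witness[of "Sigma A B" \<psi> \<phi> C F "\<lambda>x. F (\<phi> x)"] summ phi psi pp pp2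
    by auto
  have i1: "infsum (\<lambda>x. F (\<phi> x)) (Sigma A B) = infsum F C"
    by (rule infsum_reindex_bij_witness[of "Sigma A B" \<psi> \<phi> C]) (use phi psi pp pp2 in auto)
  have s2: "(\<lambda>(a,b). f a * h b) summable_on Sigma A B"
    using s1 by (rule summable_on_cong[THEN iffD1, rotated]) (auto simp: eq)
  have i2: "infsum (\<lambda>x. F (\<phi> x)) (Sigma A B) = infsum (\<lambda>(a,b). f a * h b) (Sigma A B)"
    by (rule infsum_cong) (auto simp: eq)
  have "infsum (\<lambda>(a,b). f a * h b) (Sigma A B) = infsum (\<lambda>a. infsum (\<lambda>b. f a * h b) (B a)) A"
    using infsum_Sigma_banach[OF s2] by simp
  also have "\<dots> = infsum (\<lambda>a. f a * sum h (B a)) A"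
    by (rule infsum_cong) (simp add: fin sum_distrib_left)
  finally show ?thesis using i1 i2 by simp
qed

definition PF_ok :: "nat \<Rightarrow> nat \<Rightarrow> int \<Rightarrow> int \<Rightarrow> (rat \<times> nat \<times> int) list \<Rightarrow> bool" where
  "PF_ok a b s t L \<longleftrightarrow> (\<forall>(c,sh,e)\<in>set L. (sh = a \<or> sh = b) \<and> max e 0 \<le> max s 0 + max t 0) \<and>
     (\<forall>x::nat. 1 \<le> x \<longrightarrow> inverse ((of_nat (x+a)::complex) powi s * of_nat (x+b) powi t) =
        (\<Sum>(c,sh,e)\<leftarrow>L. of_rat c * inverse (of_nat (x+sh) powi e)))"

lemma sl_scale:
  "(\<Sum>(c,sh,e)\<leftarrow>map (\<lambda>(c,sh,e). (\<alpha> * c, sh, e)) L. (of_rat c :: complex) * f sh e) =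
     of_rat \<alpha> * (\<Sum>(c,sh,e)\<leftarrow>L. of_rat c * f sh e)"
  by (induction L) (auto simp: of_rat_mult algebra_simps)

lemma pf_nonpos:
  assumes "t \<le> 0"
  shows "\<exists>L. PF_ok a b s t L"
proof -
  define n where "n = nat (-t)"
  define d :: int where "d = int b - int a"
  define L where "L = map (\<lambda>l. (of_nat (n choose l) * of_int d ^ (n - l) :: rat, a, s - int l)) [0..<Suc n]"
  have w: "\<forall>(c,sh,e)\<in>set L. (sh = a \<or> sh = b) \<and> max e 0 \<le> max s 0 + max t 0"
    using assms by (auto simp: L_def)
  have "inverse ((of_nat (x+a)::complex) powi s * of_nat (x+b) powi t) =
        (\<Sum>(c,sh,e)\<leftarrow>L. of_rat c * inverse (of_nat (x+sh) powi e))" if x: "1 \<le> x" for x :: nat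
  proof -
    define X :: complex where "X = of_nat (x + a)"
    have X0: "X \<noteq> 0" unfolding X_def of_nat_eq_0_iff using x by simp
    have Y: "(of_nat (x+b) :: complex) = X + of_int d" by (simp add: X_def d_def)
    have t: "t = - int n" using assms by (simp add: n_def)
    have "inverse ((of_nat (x+a)::complex) powi s * of_nat (x+b) powi t) = inverse (X powi s) * (X + of_int d)^n"
      unfolding X_def[symmetric] Y t by (simp add: power_int_minus)
    also have "\<dots> = inverse (X powi s) * (\<Sum>l\<le>n. of_nat (n choose l) * X^l * of_int d^(n-l))"
      by (simp add: binomial_ring)
    also have "\<dots> = (\<Sum>l\<le>n. of_nat (n choose l) * of_int d^(n-l) * inverse (X powi (s - int l)))"
      unfolding sum_distrib_left
      by (rule sum.cong) (auto simp: power_int_diff X0 field_simps)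
    also have "\<dots> = (\<Sum>l\<in>{..n}. of_rat (of_nat (n choose l) * of_int d^(n-l) :: rat) * inverse (X powi (s - int l)))"
      by (intro sum.cong) (simp_all add: of_rat_mult of_rat_power)
    also have "\<dots> = (\<Sum>l\<leftarrow>[0..<Suc n]. of_rat (of_nat (n choose l) * of_int d^(n-l) :: rat) * inverse (X powi (s - int l)))"
      by (simp only: sum_list_distinct_conv_sum_set[OF distinct_upt] set_upt atLeast0LessThan lessThan_Suc_atMost)
    also have "\<dots> = (\<Sum>(c,sh,e)\<leftarrow>L. of_rat c * inverse (of_nat (x+sh) powi e))"
      unfolding L_def map_map by (simp only: o_def case_prod_conv X_def)
    finally show ?thesis .
  qed
  then show ?thesis using w unfolding PF_ok_def by blast
qed

lemma pf_swap:
  assumes "PF_ok b a t s L"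
  shows "PF_ok a b s t L"
  using assms unfolding PF_ok_def by (auto simp: mult.commute add.commute)

lemma sl_append:
  "(\<Sum>(c,sh,e)\<leftarrow>L1 @ L2. (of_rat c :: complex) * f sh e) =
     (\<Sum>(c,sh,e)\<leftarrow>L1. of_rat c * f sh e) + (\<Sum>(c,sh,e)\<leftarrow>L2. of_rat c * f sh e)"
  by simp

lemma pf_exists: "\<exists>L. PF_ok a b s t L"
proof (induction "nat s + nat t" arbitrary: s t rule: less_induct)
  case less
  show ?case
  proof (cases "t \<le> 0")
    case True then show ?thesis by (rule pf_nonpos)
  next
    case tpos: False
    show ?thesis
    proof (cases "s \<le> 0")
      case True then show ?thesis using pf_nonpos[of s b a t] pf_swap by blast
    next
      case spos: False
      show ?thesis
      proof (cases "a = b")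
        case True
        define L where "L = [(1::rat, a, s + t)]"
        have "PF_ok a b s t L"
          unfolding PF_ok_def L_def using True tpos spos
          by (auto simp: power_int_add)
        then show ?thesis by blast
      next
        case ab: False
        obtain L1 where L1: "PF_ok a b s (t - 1) L1" using less[of s "t - 1"] tpos spos by auto
        obtain L2 where L2: "PF_ok a b (s - 1) t L2" using less[of "s - 1" t] tpos spos by auto
        define \<alpha> :: rat where "\<alpha> = 1 / (of_int (int b - int a))"
        define L where "L = map (\<lambda>(c,sh,e). (\<alpha> * c, sh, e)) L1 @ map (\<lambda>(c,sh,e). (-\<alpha> * c, sh, e)) L2"
        have w: "\<forall>(c,sh,e)\<in>set L. (sh = a \<or> sh = b) \<and> max e 0 \<le> max s 0 + max t 0"
          using L1 L2 tpos spos unfolding PF_ok_def L_def by fastforce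
        have "inverse ((of_nat (x+a)::complex) powi s * of_nat (x+b) powi t) =
              (\<Sum>(c,sh,e)\<leftarrow>L. of_rat c * inverse (of_nat (x+sh) powi e))" if x: "1 \<le> x" for x :: nat
        proof -
          define X :: complex where "X = of_nat (x + a)"
          define Y :: complex where "Y = of_nat (x + b)"
          have X0: "X \<noteq> 0" unfolding X_def of_nat_eq_0_iff using x by simp
          have Y0: "Y \<noteq> 0" unfolding Y_def of_nat_eq_0_iff using x by simp
          have d: "Y - X = of_rat (1 / \<alpha>)" by (simp add: X_def Y_def \<alpha>_def of_rat_diff)
          have a0: "(of_rat \<alpha> :: complex) \<noteq> 0" using ab by (simp add: \<alpha>_def)
          have Xs: "X powi s = X powi (s - 1) * X" using X0 by (simp add: power_int_diff)
          have Yt: "Y powi t = Y powi (t - 1) * Y" using Y0 by (simp add: power_int_diff)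
          have Xs0: "X powi (s - 1) \<noteq> 0" using X0 by simp
          have Yt0: "Y powi (t - 1) \<noteq> 0" using Y0 by simp
          have key: "inverse (X powi s * Y powi t) =
                of_rat \<alpha> * inverse (X powi s * Y powi (t - 1)) - of_rat \<alpha> * inverse (X powi (s - 1) * Y powi t)"
          proof -
            have "of_rat \<alpha> * (Y - X) = (1::complex)" using d a0
              by (simp add: of_rat_divide)
            then show ?thesis unfolding Xs Yt using X0 Y0 Xs0 Yt0
              by (simp add: field_simps)
          qed
          show ?thesis
            unfolding L_def sl_append sl_scale
            using L1 L2 x key unfolding PF_ok_def X_def Y_def by (simp add: of_rat_minus)
        qed
        then show ?thesis using w unfolding PF_ok_def by blast
      qed
    qed
  qed
qed



lemma factor_bound2:
  assumes "(x::nat) \<ge> 1" "cmod w \<ge> 1" "real a \<le> D" "nat \<bar>s\<bar> \<le> B"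
  shows "norm (inverse (w^x * (of_nat (x+a) :: complex) powi s)) \<le> (real x + D)^B * inverse (cmod w)^x"
proof -
  have "norm (inverse (w^x * (of_nat (x+a) :: complex) powi s)) \<le> (real x + real a)^nat \<bar>s\<bar> * inverse (cmod w)^x"
    using factor_bound assms by blast
  also have "\<dots> \<le> (real x + D)^B * inverse (cmod w)^x"
    using assms by (intro mult_right_mono pow_weaken) auto
  finally show ?thesis .
qed

lemma inv_pow_le1: "cmod w \<ge> 1 \<Longrightarrow> inverse (cmod w)^x \<le> 1"
  by (intro power_le_one) (auto simp: inverse_le_1_iff)

lemma prod_split_at:
  fixes f :: "nat \<Rightarrow> 'a::comm_monoid_mult"
  assumes "1 \<le> p" "p \<le> Suc N"
  shows "(\<Prod>i\<in>{1..N}. f i) = (\<Prod>i\<in>{1..p-1}. f i) * (\<Prod>i\<in>{p..N}. f i)"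
proof -
  have "{1..N} = {1..p-1} \<union> {p..N}" using assms by auto
  moreover have "{1..p-1} \<inter> {p..N} = {}" by auto
  ultimately show ?thesis by (simp add: prod.union_disjoint)
qed

definition QS :: "nat \<Rightarrow> nat \<Rightarrow> nat \<Rightarrow> (nat \<Rightarrow> nat) set" where
  "QS N p K = {k. (p \<le> N \<longrightarrow> k p \<le> K) \<and> (\<forall>i\<in>{p..N}. 1 \<le> k i) \<and> (\<forall>i\<in>{p..<N}. k (i + 1) \<le> k i)
              \<and> (\<forall>i. i \<notin> {p..N} \<longrightarrow> k i = 0)}"

lemma Qf_QS: "Qf N p s K z = (\<Sum>k\<in>QS N p K. \<Prod>i\<in>{p..N}. inverse (z i ^ k i * (of_nat (k i)) powi (s i)))"
  by (simp add: Qf_def QS_def)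

lemma desc_bound:
  fixes k :: "nat \<Rightarrow> nat"
  assumes "\<forall>i\<in>{p..<N}. k (i + 1) \<le> k i" "i \<in> {p..N}"
  shows "k i \<le> k p"
  using assms(2)
proof (induction i)
  case 0 then show ?case by simp
next
  case (Suc i)
  show ?case
  proof (cases "Suc i = p")
    case True then show ?thesis by simp
  next
    case False
    then have "i \<in> {p..<N}" using Suc.prems by auto
    then have "k (Suc i) \<le> k i" using assms(1) by auto
    moreover have "k i \<le> k p" using Suc False by auto
    ultimately show ?thesis by simp
  qed
qed

lemma QS_finite:
  assumes "1 \<le> p"
  shows "finite (QS N p K)"
proof (rule finite_subset[OF _ box_finite])
  show "QS N p K \<subseteq> box N K"
  proof
    fix k assume k: "k \<in> QS N p K"
    have "k i \<le> K" if "i \<in> {1..N}" for i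
    proof (cases "i \<in> {p..N}")
      case True
      then have "k i \<le> k p" using desc_bound[of p N k i] k by (auto simp: QS_def)
      then show ?thesis using k True by (auto simp: QS_def)
    next
      case False then show ?thesis using k by (auto simp: QS_def)
    qed
    then show "k \<in> box N K" using k assms by (auto simp: QS_def box_def)
  qed
qed

lemma infsum_sum_fin:
  fixes f :: "'i \<Rightarrow> 'a \<Rightarrow> complex"
  assumes "finite I" "\<And>i. i \<in> I \<Longrightarrow> f i summable_on A"
  shows "infsum (\<lambda>x. \<Sum>i\<in>I. f i x) A = (\<Sum>i\<in>I. infsum (f i) A) \<and> (\<lambda>x. \<Sum>i\<in>I. f i x) summable_on A"
  using assms
proof (induction I rule: finite_induct)
  case empty
  show ?case by simp
next
  case (insert a I)
  then have IH: "infsum (\<lambda>x. \<Sum>i\<in>I. f i x) A = (\<Sum>i\<in>I. infsum (f i) A)" "(\<lambda>x. \<Sum>i\<in>I. f i x) summable_on A"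
    by auto
  have fa: "f a summable_on A" using insert.prems by auto
  show ?case using insert IH fa by (simp add: infsum_add summable_on_add)
qed

locale setting =
  fixes N :: nat and s :: "nat \<Rightarrow> int" and m j :: "nat \<Rightarrow> nat" and z :: "nat \<Rightarrow> complex"
  assumes N1: "1 \<le> N" and z1: "1 < cmod (z 1)" and zi: "\<And>i. i \<in> {2..N} \<Longrightarrow> 1 \<le> cmod (z i)"
begin

lemma zge: "i \<in> {1..N} \<Longrightarrow> 1 \<le> cmod (z i)"
  using z1 zi by (cases "i = 1") auto

lemma znz: "i \<in> {1..N} \<Longrightarrow> z i \<noteq> 0"
  by (metis norm_zero not_one_le_zero zge)

definition g :: "(nat \<Rightarrow> nat) \<Rightarrow> complex" where
  "g n = (\<Prod>i\<in>{1..N}. inverse (z i ^ n i * of_nat (n i) powi s i))"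

definition V :: "(nat \<Rightarrow> nat) set" where
  "V = {n. (\<forall>i. i \<notin> {1..N} \<longrightarrow> n i = 0) \<and> (\<forall>i\<in>{1..N}. 1 \<le> n i) \<and> (\<forall>i\<in>{2..N}. n i \<le> n (i-1) + j i + m i)}"

lemma g_summable: "g summable_on V"
proof -
  define B where "B = (\<Sum>i\<in>{1..N}. nat \<bar>s i\<bar>)"
  have sB: "nat \<bar>s i\<bar> \<le> B" if "i \<in> {1..N}" for i
    unfolding B_def using that by (intro member_le_sum) auto
  have "(\<lambda>k. \<Prod>i\<in>{1..N}. (\<lambda>i x. inverse (z i ^ x * of_nat x powi s i)) i (k i)) summable_on V"
  proof (rule prod_summable[where q = "inverse (cmod (z 1))" and D = 0 and B = B and M = "\<Sum>l\<in>{1..N}. j l + m l"])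
    show "1 \<le> N" by (rule N1)
    show "0 < inverse (cmod (z 1))" using znz[of 1] N1 by simp
    show "inverse (cmod (z 1)) < 1" using z1 by (simp add: inverse_less_1_iff)
    show "(0::real) \<le> 0" by simp
  next
    fix k i assume k: "k \<in> V"
    have ch: "\<forall>i\<in>{2..N}. k i \<le> k (i - 1) + (j i + m i)" using k by (auto simp: V_def add.assoc)
    show "(i \<notin> {1..N} \<longrightarrow> k i = 0) \<and> (i \<in> {1..N} \<longrightarrow> 1 \<le> k i \<and> k i \<le> k 1 + (\<Sum>l\<in>{1..N}. j l + m l))"
      using k chain_bound[OF ch, of i] by (auto simp: V_def)
  next
    fix i x assume i: "i \<in> {1..N}" and x: "(1::nat) \<le> x"
    have "norm (inverse (z i ^ x * of_nat (x + 0) powi s i)) \<le> (real x + 0)^B * inverse (cmod (z i))^x"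
      using factor_bound2[OF x zge[OF i], of 0 0 "s i" B] sB[OF i] by simp
    also have "\<dots> \<le> (real x + 0)^B * (if i = 1 then inverse (cmod (z 1))^x else 1)"
      using inv_pow_le1[OF zge[OF i], of x]
      by (cases "i = 1") (auto intro: mult_left_le)
    finally show "norm ((\<lambda>i x. inverse (z i ^ x * of_nat x powi s i)) i x) \<le> (real x + 0)^B * (if i = 1 then inverse (cmod (z 1))^x else 1)"
      by simp
  qed
  then show ?thesis by (simp add: g_def[abs_def])
qed

lemma g_summable_sub: "A \<subseteq> V \<Longrightarrow> g summable_on A"
  using g_summable summable_on_subset_banach by blast

lemma ind_infsum: "infsum g {n\<in>V. P n} = infsum (\<lambda>n. of_bool (P n) * g n) V"
  by (rule infsum_cong_neutral) auto

lemma ind_summable: "(\<lambda>n. of_bool (P n) * g n) summable_on V"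
proof -
  have "g summable_on {n\<in>V. P n}" by (rule g_summable_sub) auto
  moreover have "g summable_on {n\<in>V. P n} \<longleftrightarrow> (\<lambda>n. of_bool (P n) * g n) summable_on V"
    by (rule summable_on_cong_neutral) auto
  ultimately show ?thesis by blast
qed

definition Hd :: "nat \<Rightarrow> (nat \<Rightarrow> nat) \<Rightarrow> bool" where
  "Hd p n \<longleftrightarrow> (1 \<le> p \<longrightarrow> j 1 < n 1) \<and> (\<forall>i\<in>{2..p}. j i < n i \<and> n i + j (i-1) \<le> n (i-1) + j i + m i)"

definition Tl :: "nat \<Rightarrow> (nat \<Rightarrow> nat) \<Rightarrow> bool" where
  "Tl p n \<longleftrightarrow> (\<forall>i\<in>{Suc p..N}. 2 \<le> i \<longrightarrow> n i \<le> n (i-1))"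

definition X :: "nat \<Rightarrow> complex" where
  "X p = infsum g {n\<in>V. Hd p n \<and> Tl p n}"

lemma Hd_gt: "Hd p n \<Longrightarrow> i \<in> {1..p} \<Longrightarrow> j i < n i"
  unfolding Hd_def by (cases "i = 1") auto

lemma Hd_step:
  assumes "1 \<le> p"
  shows "Hd p n \<longleftrightarrow> Hd (p-1) n \<and> j p < n p \<and> (2 \<le> p \<longrightarrow> n p + j (p-1) \<le> n (p-1) + j p + m p)"
proof (cases "p = 1")
  case True then show ?thesis by (simp add: Hd_def)
next
  case False
  then have e: "{2..p} = insert p {2..p-1}" using assms by auto
  have "1 \<le> p - 1" using False assms by simp
  then show ?thesis using False assms unfolding Hd_def e by auto
qed

lemma Tl_step:
  assumes "1 \<le> p" "p \<le> N"
  shows "Tl (p-1) n \<longleftrightarrow> Tl p n \<and> (2 \<le> p \<longrightarrow> n p \<le> n (p-1))"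
proof -
  have e: "{Suc (p-1)..N} = insert p {Suc p..N}" using assms by auto
  show ?thesis unfolding Tl_def e by auto
qed

lemma sum_ind_int:
  fixes u v c :: nat
  shows "(\<Sum>K\<in>{u..v}. (of_bool (c = K) :: int)) = of_bool (u \<le> c \<and> c \<le> v)"
proof -
  have "(\<Sum>K\<in>{u..v}. (of_bool (c = K) :: int)) = (\<Sum>K\<in>{u..v}. if K = c then 1 else 0)"
    by (intro sum.cong) auto
  also have "\<dots> = of_bool (u \<le> c \<and> c \<le> v)" by (subst sum.delta) auto
  finally show ?thesis .
qed

lemma sum_ind_shift:
  fixes u v x J a :: nat
  shows "(\<Sum>K\<in>{u..v}. (of_bool (x + J = a + K) :: int)) = of_bool (a \<le> x + J \<and> u \<le> x + J - a \<and> x + J - a \<le> v)"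
proof (cases "a \<le> x + J")
  case True
  have "(\<Sum>K\<in>{u..v}. (of_bool (x + J = a + K) :: int)) = (\<Sum>K\<in>{u..v}. of_bool (x + J - a = K))"
    using True by (intro sum.cong) auto
  then show ?thesis using True by (simp add: sum_ind_int)
next
  case False
  then show ?thesis by (simp add: sum.neutral)
qed

lemma arith_id:
  fixes a x J jp mp :: nat
  assumes "J < a" "1 \<le> x"
  shows "(of_bool (x \<le> a) :: int) + eps (int J) (int (jp + mp)) * (\<Sum>K\<in>{min J (jp+mp) + 1 .. max J (jp+mp)}. of_bool (x + J = a + K))
       = of_bool (jp < x \<and> x + J \<le> a + jp + mp) + of_bool (x \<le> jp)"
  unfolding sum_ind_shift using assms by (auto simp: eps_def)

end



context setting begin

definition Qt :: "nat \<Rightarrow> complex" where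
  "Qt p = infsum g {n\<in>V. Hd (p-1) n \<and> Tl p n \<and> n p \<le> j p}"

definition Rt :: "nat \<Rightarrow> nat \<Rightarrow> complex" where
  "Rt p K = infsum g {n\<in>V. Hd (p-1) n \<and> Tl p n \<and> n p + j (p-1) = n (p-1) + K}"

lemma arith_id_c:
  fixes a x J jp mp :: nat
  assumes "J < a" "1 \<le> x"
  shows "(of_bool (x \<le> a) :: complex) + of_int (eps (int J) (int (jp + mp))) * (\<Sum>K\<in>{min J (jp+mp) + 1 .. max J (jp+mp)}. of_bool (x + J = a + K))
       = of_bool (jp < x \<and> x + J \<le> a + jp + mp) + of_bool (x \<le> jp)"
proof -
  have "(of_int ((of_bool (x \<le> a) :: int) + eps (int J) (int (jp + mp)) * (\<Sum>K\<in>{min J (jp+mp) + 1 .. max J (jp+mp)}. of_bool (x + J = a + K))) :: complex)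
       = of_int (of_bool (jp < x \<and> x + J \<le> a + jp + mp) + of_bool (x \<le> jp))"
    using arith_id[OF assms, of jp mp] by simp
  then show ?thesis by (simp add: of_int_sum)
qed

lemma pointwise_step:
  assumes p: "p \<in> {1..N}" and n: "n \<in> V"
  defines "c \<equiv> (if 2 \<le> p then of_int (eps (int (j (p-1))) (int (j p + m p))) else (0::complex))"
  shows "of_bool (Hd (p-1) n \<and> Tl (p-1) n) * g n
          + c * (\<Sum>K\<in>{min (j (p-1)) (j p + m p) + 1 .. max (j (p-1)) (j p + m p)}.
                   of_bool (Hd (p-1) n \<and> Tl p n \<and> n p + j (p-1) = n (p-1) + K) * g n)
        = of_bool (Hd p n \<and> Tl p n) * g n + of_bool (Hd (p-1) n \<and> Tl p n \<and> n p \<le> j p) * g n"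
proof (cases "Hd (p-1) n \<and> Tl p n")
  case False
  then show ?thesis using Hd_step[of p n] Tl_step[of p n] p by auto
next
  case True
  have np: "1 \<le> n p" using n p by (auto simp: V_def)
  show ?thesis
  proof (cases "p = 1")
    case True
    then show ?thesis using \<open>Hd (p-1) n \<and> Tl p n\<close> Hd_step[of p n] Tl_step[of p n] p c_def
      by (auto simp: algebra_simps)
  next
    case False
    then have p2: "2 \<le> p" using p by auto
    have a: "j (p-1) < n (p-1)" using Hd_gt[of "p-1" n "p-1"] True p2 by auto
    have e0: "(Hd (p-1) n \<and> Tl (p-1) n) \<longleftrightarrow> n p \<le> n (p-1)" using True Tl_step[of p n] p p2 by auto
    have e1: "(Hd p n \<and> Tl p n) \<longleftrightarrow> j p < n p \<and> n p + j (p-1) \<le> n (p-1) + j p + m p"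
      using True Hd_step[of p n] p p2 by auto
    have id: "(of_bool (n p \<le> n (p-1)) :: complex) + c * (\<Sum>K\<in>{min (j (p-1)) (j p + m p) + 1 .. max (j (p-1)) (j p + m p)}. of_bool (n p + j (p-1) = n (p-1) + K))
       = of_bool (j p < n p \<and> n p + j (p-1) \<le> n (p-1) + j p + m p) + of_bool (n p \<le> j p)"
      using arith_id_c[OF a np, of "j p" "m p"] p2 by (simp add: c_def)
    have "of_bool (Hd (p-1) n \<and> Tl (p-1) n) * g n
          + c * (\<Sum>K\<in>{min (j (p-1)) (j p + m p) + 1 .. max (j (p-1)) (j p + m p)}.
                   of_bool (Hd (p-1) n \<and> Tl p n \<and> n p + j (p-1) = n (p-1) + K) * g n)
         = ((of_bool (n p \<le> n (p-1)) :: complex) + c * (\<Sum>K\<in>{min (j (p-1)) (j p + m p) + 1 .. max (j (p-1)) (j p + m p)}. of_bool (n p + j (p-1) = n (p-1) + K))) * g n"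
      using True e0 by (simp add: distrib_right sum_distrib_right mult.assoc)
    also have "\<dots> = (of_bool (j p < n p \<and> n p + j (p-1) \<le> n (p-1) + j p + m p) + of_bool (n p \<le> j p)) * g n"
      by (simp only: id)
    also have "\<dots> = of_bool (Hd p n \<and> Tl p n) * g n + of_bool (Hd (p-1) n \<and> Tl p n \<and> n p \<le> j p) * g n"
      using True e1 by (simp add: distrib_right)
    finally show ?thesis .
  qed
qed

lemma X_step:
  assumes p: "p \<in> {1..N}"
  defines "c \<equiv> (if 2 \<le> p then of_int (eps (int (j (p-1))) (int (j p + m p))) else (0::complex))"
  shows "X (p-1) + c * (\<Sum>K\<in>{min (j (p-1)) (j p + m p) + 1 .. max (j (p-1)) (j p + m p)}. Rt p K) = X p + Qt p"
proof -
  define Ks where "Ks = {min (j (p-1)) (j p + m p) + 1 .. max (j (p-1)) (j p + m p)}"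
  define R where "R K n = (Hd (p-1) n \<and> Tl p n \<and> n p + j (p-1) = n (p-1) + K)" for K n
  have fin: "finite Ks" by (simp add: Ks_def)
  have sR: "\<And>K. K \<in> Ks \<Longrightarrow> (\<lambda>n. of_bool (R K n) * g n) summable_on V" by (rule ind_summable)
  have Rs: "(\<Sum>K\<in>Ks. Rt p K) = infsum (\<lambda>n. \<Sum>K\<in>Ks. of_bool (R K n) * g n) V"
       "(\<lambda>n. \<Sum>K\<in>Ks. of_bool (R K n) * g n) summable_on V"
    using infsum_sum_fin[OF fin sR] by (auto simp: Rt_def R_def ind_infsum)
  have "X (p-1) + c * (\<Sum>K\<in>Ks. Rt p K)
      = infsum (\<lambda>n. of_bool (Hd (p-1) n \<and> Tl (p-1) n) * g n) V + infsum (\<lambda>n. c * (\<Sum>K\<in>Ks. of_bool (R K n) * g n)) V"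
    by (simp add: X_def ind_infsum Rs infsum_cmult_right')
  also have "\<dots> = infsum (\<lambda>n. of_bool (Hd (p-1) n \<and> Tl (p-1) n) * g n + c * (\<Sum>K\<in>Ks. of_bool (R K n) * g n)) V"
    by (rule infsum_add[symmetric]) (auto intro!: ind_summable summable_on_cmult_right Rs(2))
  also have "\<dots> = infsum (\<lambda>n. of_bool (Hd p n \<and> Tl p n) * g n + of_bool (Hd (p-1) n \<and> Tl p n \<and> n p \<le> j p) * g n) V"
    by (rule infsum_cong) (use pointwise_step[OF p] in \<open>simp add: R_def Ks_def c_def\<close>)
  also have "\<dots> = X p + Qt p"
    by (subst infsum_add) (auto intro!: ind_summable simp: X_def Qt_def ind_infsum)
  finally show ?thesis by (simp add: Ks_def)
qed

end



context setting begin

lemma X_0: "X 0 = La N s (\<lambda>i. inverse (z i))"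
proof -
  have S: "{n\<in>V. Hd 0 n \<and> Tl 0 n} = {k. (\<forall>i\<in>{1..N}. 1 \<le> k i) \<and> (\<forall>i\<in>{1..<N}. k (i + 1) \<le> k i)
                 \<and> (\<forall>i. i \<notin> {1..N} \<longrightarrow> k i = 0)}"
  proof (intro equalityI subsetI)
    fix n :: "nat \<Rightarrow> nat" assume n: "n \<in> {n\<in>V. Hd 0 n \<and> Tl 0 n}"
    have "n (i + 1) \<le> n i" if "i \<in> {1..<N}" for i
      using n that unfolding Tl_def by (auto dest!: bspec[of _ _ "i+1"])
    then show "n \<in> {k. (\<forall>i\<in>{1..N}. 1 \<le> k i) \<and> (\<forall>i\<in>{1..<N}. k (i + 1) \<le> k i) \<and> (\<forall>i. i \<notin> {1..N} \<longrightarrow> k i = 0)}"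
      using n by (auto simp: V_def)
  next
    fix n :: "nat \<Rightarrow> nat" assume n: "n \<in> {k. (\<forall>i\<in>{1..N}. 1 \<le> k i) \<and> (\<forall>i\<in>{1..<N}. k (i + 1) \<le> k i) \<and> (\<forall>i. i \<notin> {1..N} \<longrightarrow> k i = 0)}"
    have d: "n i \<le> n (i - 1)" if "i \<in> {2..N}" for i
      using n that by (auto dest!: bspec[of _ _ "i-1"])
    then have "n i \<le> n (i-1) + j i + m i" if "i \<in> {2..N}" for i using that by fastforce
    then show "n \<in> {n\<in>V. Hd 0 n \<and> Tl 0 n}" using n d by (auto simp: V_def Hd_def Tl_def)
  qed
  show ?thesis unfolding X_def La_def S
    by (rule infsum_cong) (simp add: g_def power_inverse divide_inverse inverse_mult_distrib)
qed

lemma X_N: "X N = (\<Prod>i\<in>{1..N}. inverse (z i ^ j i)) * Brick N s m j z"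
proof -
  define c where "c = (\<Prod>i\<in>{1..N}. inverse (z i ^ j i))"
  define sh where "sh k = (\<lambda>i. if i \<in> {1..N} then k i + j i else 0)" for k :: "nat \<Rightarrow> nat"
  define un where "un n = (\<lambda>i. if i \<in> {1..N} then n i - j i else 0)" for n :: "nat \<Rightarrow> nat"
  have "infsum (\<lambda>k. c * (\<Prod>i\<in>{1..N}. inverse (z i ^ k i * of_nat (k i + j i) powi s i))) (brick_idx N m)
        = infsum g {n\<in>V. Hd N n \<and> Tl N n}"
  proof (rule infsum_reindex_bij_witness[of _ un sh])
    fix a assume a: "a \<in> brick_idx N m"
    show "un (sh a) = a" using a by (auto simp: un_def sh_def brick_idx_def fun_eq_iff)
    have a1: "\<And>i. i \<in> {1..N} \<Longrightarrow> 1 \<le> a i" and a2: "\<And>i. i \<in> {2..N} \<Longrightarrow> a i \<le> a (i-1) + m i"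
      and a0: "\<And>i. i \<notin> {1..N} \<Longrightarrow> a i = 0"
      using a by (auto simp: brick_idx_def)
    have shi: "sh a i = a i + j i" if "i \<in> {1..N}" for i using that by (simp add: sh_def)
    have ch: "sh a i \<le> sh a (i-1) + j i + m i \<and> sh a i + j (i-1) \<le> sh a (i-1) + j i + m i \<and> j i < sh a i"
      if i: "i \<in> {2..N}" for i
    proof -
      have "i \<in> {1..N}" "i - 1 \<in> {1..N}" using i by auto
      then show ?thesis using a2[OF i] a1[of i] by (simp add: shi)
    qed
    have sh0: "sh a i = 0" if "i \<notin> {1..N}" for i using that unfolding sh_def by auto
    have s1: "1 \<le> sh a i" if "i \<in> {1..N}" for i using a1[OF that] shi[OF that] by simp
    have "sh a \<in> V"
      unfolding V_def using ch s1 sh0 by auto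
    moreover have "Hd N (sh a)"
      unfolding Hd_def using ch a1[of 1] shi[of 1] N1 by auto
    moreover have "Tl N (sh a)" by (simp add: Tl_def)
    ultimately show "sh a \<in> {n\<in>V. Hd N n \<and> Tl N n}" by blast
    show "g (sh a) = c * (\<Prod>i\<in>{1..N}. inverse (z i ^ a i * of_nat (a i + j i) powi s i))"
      unfolding g_def c_def prod.distrib[symmetric]
      by (rule prod.cong) (auto simp: sh_def power_add inverse_mult_distrib)
  next
    fix b assume b: "b \<in> {n\<in>V. Hd N n \<and> Tl N n}"
    have bg: "\<And>i. i \<in> {1..N} \<Longrightarrow> j i < b i" using b Hd_gt by blast
    have b0: "\<And>i. i \<notin> {1..N} \<Longrightarrow> b i = 0" using b by (auto simp: V_def)
    have b2: "\<And>i. i \<in> {2..N} \<Longrightarrow> b i + j (i-1) \<le> b (i-1) + j i + m i" using b by (auto simp: Hd_def)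
    show "sh (un b) = b"
    proof
      fix i show "sh (un b) i = b i"
        by (cases "i \<in> {1..N}") (use bg[of i] b0[of i] in \<open>auto simp: un_def sh_def\<close>)
    qed
    have "b i - j i \<le> b (i-1) - j (i-1) + m i" if "i \<in> {2..N}" for i
      using b2[OF that] bg[of i] bg[of "i-1"] that by auto
    then have c2: "\<forall>i\<in>{2..N}. un b i \<le> un b (i - 1) + m i"
      by (auto simp: un_def)
    have c1: "\<forall>i\<in>{1..N}. 1 \<le> un b i"
    proof
      fix i assume i: "i \<in> {1..N}" show "1 \<le> un b i" using bg[OF i] i by (simp add: un_def)
    qed
    have c0: "\<forall>i. i \<notin> {1..N} \<longrightarrow> un b i = 0" by (simp add: un_def)
    show "un b \<in> brick_idx N m" unfolding brick_idx_def using c0 c1 c2 by blast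
  qed
  then show ?thesis
    by (simp add: X_def Brick_def infsum_cmult_right' c_def)
qed

end



context setting begin

lemma head_fwd:
  assumes a: "a \<in> brick_idx r m" and n: "\<And>i. i \<in> {1..r} \<Longrightarrow> n i = a i + j i"
  shows "Hd r n" "\<And>i. i \<in> {2..r} \<Longrightarrow> n i \<le> n (i-1) + j i + m i" "\<And>i. i \<in> {1..r} \<Longrightarrow> 1 \<le> n i"
proof -
  have a1: "\<And>i. i \<in> {1..r} \<Longrightarrow> 1 \<le> a i" and a2: "\<And>i. i \<in> {2..r} \<Longrightarrow> a i \<le> a (i-1) + m i"
    using a by (auto simp: brick_idx_def)
  have ch: "n i \<le> n (i-1) + j i + m i \<and> n i + j (i-1) \<le> n (i-1) + j i + m i \<and> j i < n i"
    if i: "i \<in> {2..r}" for i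
  proof -
    have "i \<in> {1..r}" "i - 1 \<in> {1..r}" using i by auto
    then show ?thesis using a2[OF i] a1[of i] by (simp add: n)
  qed
  show "\<And>i. i \<in> {2..r} \<Longrightarrow> n i \<le> n (i-1) + j i + m i" using ch by blast
  show "\<And>i. i \<in> {1..r} \<Longrightarrow> 1 \<le> n i" using a1 n by force
  show "Hd r n" unfolding Hd_def
  proof (intro conjI impI ballI)
    assume "1 \<le> r" then show "j 1 < n 1" using n[of 1] a1[of 1] by simp
  next
    fix i assume "i \<in> {2..r}" then show "j i < n i" "n i + j (i - 1) \<le> n (i - 1) + j i + m i" using ch by auto
  qed
qed

lemma head_bwd:
  assumes "Hd r n"
  shows "(\<lambda>i. if i \<in> {1..r} then n i - j i else 0) \<in> brick_idx r m"
proof -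
  define u where "u = (\<lambda>i. if i \<in> {1..r} then n i - j i else 0)"
  have bg: "\<And>i. i \<in> {1..r} \<Longrightarrow> j i < n i" using assms Hd_gt by blast
  have b2: "\<And>i. i \<in> {2..r} \<Longrightarrow> n i + j (i-1) \<le> n (i-1) + j i + m i" using assms by (auto simp: Hd_def)
  have "n i - j i \<le> n (i-1) - j (i-1) + m i" if "i \<in> {2..r}" for i
    using b2[OF that] bg[of i] bg[of "i-1"] that by auto
  then have c2: "\<forall>i\<in>{2..r}. u i \<le> u (i - 1) + m i"
    by (auto simp: u_def)
  have c1: "\<forall>i\<in>{1..r}. 1 \<le> u i"
  proof
    fix i assume i: "i \<in> {1..r}" show "1 \<le> u i" using bg[OF i] i by (simp add: u_def)
  qed
  have c0: "\<forall>i. i \<notin> {1..r} \<longrightarrow> u i = 0" by (simp add: u_def)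
  show ?thesis unfolding brick_idx_def u_def[symmetric] using c0 c1 c2 by blast
qed

lemma prod_shift_j:
  assumes "\<And>i. i \<in> I \<Longrightarrow> z i \<noteq> 0"
  shows "(\<Prod>i\<in>I. z i ^ j i) * (\<Prod>i\<in>I. inverse (z i ^ (a i + j i) * x i)) = (\<Prod>i\<in>I. inverse (z i ^ a i * x i))"
  unfolding prod.distrib[symmetric]
  by (rule prod.cong) (use assms in \<open>auto simp: power_add inverse_mult_distrib\<close>)

lemma Qt_eq:
  assumes p: "p \<in> {1..N}"
  shows "Qt p = (\<Prod>i\<in>{1..p-1}. inverse (z i ^ j i)) * (Brick (p-1) s m j z * Qf N p s (j p) z)"
proof -
  define A where "A = brick_idx (p-1) m"
  define Bq where "Bq = QS N p (j p)"
  define C where "C = {n\<in>V. Hd (p-1) n \<and> Tl p n \<and> n p \<le> j p}"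
  define cp where "cp = (\<Prod>i\<in>{1..p-1}. z i ^ j i)"
  define \<phi> where "\<phi> = (\<lambda>(a::nat\<Rightarrow>nat, q::nat\<Rightarrow>nat). (\<lambda>i. if i \<in> {1..p-1} then a i + j i else q i))"
  define \<psi> where "\<psi> = (\<lambda>n::nat\<Rightarrow>nat. ((\<lambda>i. if i \<in> {1..p-1} then n i - j i else 0), (\<lambda>i. if i \<in> {p..N} then n i else 0)))"
  define f where "f a = (\<Prod>i\<in>{1..p-1}. inverse (z i ^ a i * of_nat (a i + j i) powi s i))" for a :: "nat \<Rightarrow> nat"
  define h where "h q = (\<Prod>i\<in>{p..N}. inverse (z i ^ q i * of_nat (q i) powi s i))" for q :: "nat \<Rightarrow> nat"
  have pN: "p \<le> N" "1 \<le> p" using p by auto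
  have main: "infsum (\<lambda>a. f a * sum h (Bq)) A = infsum (\<lambda>n. cp * g n) C"
  proof (rule merge[where \<phi> = \<phi> and \<psi> = \<psi> and B = "\<lambda>_. Bq"])
    fix a q assume a: "a \<in> A" and q: "q \<in> Bq"
    have a0: "\<And>i. i \<notin> {1..p-1} \<Longrightarrow> a i = 0" using a by (auto simp: A_def brick_idx_def)
    have qp: "q p \<le> j p" and q1: "\<And>i. i \<in> {p..N} \<Longrightarrow> 1 \<le> q i"
      and q2: "\<And>i. i \<in> {p..<N} \<Longrightarrow> q (i+1) \<le> q i" and q0: "\<And>i. i \<notin> {p..N} \<Longrightarrow> q i = 0"
      using q pN by (auto simp: Bq_def QS_def)
    define n where "n = \<phi> (a, q)"
    have nlo: "\<And>i. i \<in> {1..p-1} \<Longrightarrow> n i = a i + j i" by (simp add: n_def \<phi>_def)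
    have nhi: "\<And>i. i \<notin> {1..p-1} \<Longrightarrow> n i = q i" by (auto simp: n_def \<phi>_def)
    note hf = head_fwd[OF a[unfolded A_def] nlo]
    have npq: "n p = q p" using nhi[of p] pN by simp
    have nhi2: "n i = q i" if "p \<le> i" for i using that pN by (auto simp: n_def \<phi>_def)
    have V0: "n i = 0" if "i \<notin> {1..N}" for i
    proof -
      have "i \<notin> {1..p-1}" "i \<notin> {p..N}" using that pN by auto
      then show ?thesis using nhi q0 by simp
    qed
    have V1: "1 \<le> n i" if "i \<in> {1..N}" for i
    proof (cases "i \<in> {1..p-1}")
      case True then show ?thesis using hf(3) by blast
    next
      case False then show ?thesis using nhi[OF False] q1[of i] that by auto
    qed
    have V2: "n i \<le> n (i-1) + j i + m i" if i: "i \<in> {2..N}" for i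
    proof -
      consider "i \<le> p - 1" | "i = p" | "i > p" by linarith
      then show ?thesis
      proof cases
        case 1 then show ?thesis using hf(2)[of i] i by auto
      next
        case 2 then show ?thesis using npq qp by auto
      next
        case 3
        then have "i - 1 \<in> {p..<N}" "i \<notin> {1..p-1}" "i - 1 \<notin> {1..p-1}" using i by auto
        then show ?thesis using q2[of "i-1"] nhi[of i] nhi[of "i-1"] 3 by auto
      qed
    qed
    have T: "Tl p n" unfolding Tl_def
    proof (intro ballI impI)
      fix i assume i: "i \<in> {Suc p..N}" "2 \<le> i"
      then have "i - 1 \<in> {p..<N}" "i \<notin> {1..p-1}" "i - 1 \<notin> {1..p-1}" by auto
      then show "n i \<le> n (i - 1)" using q2[of "i-1"] nhi[of i] nhi[of "i-1"] i by auto
    qed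
    have "n \<in> V" unfolding V_def using V0 V1 V2 by blast
    moreover have "n p \<le> j p" using npq qp by auto
    ultimately show "\<phi> (a, q) \<in> C" using hf(1) T by (simp add: C_def n_def)
    show "\<psi> (\<phi> (a, q)) = (a, q)"
    proof -
      have "(\<lambda>i. if i \<in> {1..p-1} then n i - j i else 0) = a"
      proof
        fix i show "(if i \<in> {1..p-1} then n i - j i else 0) = a i" using nlo[of i] a0[of i] by auto
      qed
      moreover have "(\<lambda>i. if i \<in> {p..N} then n i else 0) = q"
      proof
        fix i show "(if i \<in> {p..N} then n i else 0) = q i"
          using nhi[of i] q0[of i] pN by auto
      qed
      ultimately show ?thesis unfolding n_def[symmetric] \<psi>_def by simp
    qed
    have "cp * g n = f a * h q"
    proof -
      have "g n = (\<Prod>i\<in>{1..p-1}. inverse (z i ^ n i * of_nat (n i) powi s i)) * (\<Prod>i\<in>{p..N}. inverse (z i ^ n i * of_nat (n i) powi s i))"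
        unfolding g_def by (rule prod_split_at) (use pN in auto)
      also have "(\<Prod>i\<in>{1..p-1}. inverse (z i ^ n i * of_nat (n i) powi s i)) = (\<Prod>i\<in>{1..p-1}. inverse (z i ^ (a i + j i) * of_nat (a i + j i) powi s i))"
        by (rule prod.cong) (simp_all add: nlo)
      also have "(\<Prod>i\<in>{p..N}. inverse (z i ^ n i * of_nat (n i) powi s i)) = h q"
        unfolding h_def by (rule prod.cong) (use nhi2 in auto)
      finally have "cp * g n = (cp * (\<Prod>i\<in>{1..p-1}. inverse (z i ^ (a i + j i) * of_nat (a i + j i) powi s i))) * h q"
        by (simp add: mult.assoc)
      also have "cp * (\<Prod>i\<in>{1..p-1}. inverse (z i ^ (a i + j i) * of_nat (a i + j i) powi s i)) = f a"
        unfolding cp_def f_def by (rule prod_shift_j) (use znz pN in auto)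
      finally show ?thesis .
    qed
    then show "cp * g (\<phi> (a, q)) = f a * h q" by (simp add: n_def)
  next
    fix n assume n: "n \<in> C"
    have nV: "n \<in> V" and nH: "Hd (p-1) n" and nT: "Tl p n" and np: "n p \<le> j p" using n by (auto simp: C_def)
    have n0: "\<And>i. i \<notin> {1..N} \<Longrightarrow> n i = 0" and n1: "\<And>i. i \<in> {1..N} \<Longrightarrow> 1 \<le> n i" using nV by (auto simp: V_def)
    have bg: "\<And>i. i \<in> {1..p-1} \<Longrightarrow> j i < n i" using nH Hd_gt by blast
    have "(\<lambda>i. if i \<in> {p..N} then n i else 0) \<in> Bq"
    proof -
      have "n (i + 1) \<le> n i" if "i \<in> {p..<N}" for i
        using nT that pN unfolding Tl_def by (auto dest!: bspec[of _ _ "i+1"])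
      then show ?thesis using np n1 pN by (auto simp: Bq_def QS_def)
    qed
    then show "\<psi> n \<in> Sigma A (\<lambda>_. Bq)" using head_bwd[OF nH] by (simp add: \<psi>_def A_def)
    show "\<phi> (\<psi> n) = n"
    proof
      fix i show "\<phi> (\<psi> n) i = n i"
        using bg[of i] n0[of i] pN by (cases "i \<in> {1..p-1}") (auto simp: \<phi>_def \<psi>_def)
    qed
  next
    show "(\<lambda>n. cp * g n) summable_on C"
      by (rule summable_on_cmult_right, rule g_summable_sub) (auto simp: C_def)
  qed (use QS_finite[OF pN(2)] in \<open>simp add: Bq_def\<close>)
  have "infsum (\<lambda>a. f a * sum h Bq) A = Brick (p-1) s m j z * Qf N p s (j p) z"
    by (simp add: infsum_cmult_left' A_def Brick_def f_def h_def Bq_def Qf_QS)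
  moreover have "infsum (\<lambda>n. cp * g n) C = cp * Qt p"
    by (simp add: infsum_cmult_right' Qt_def C_def)
  moreover have "cp \<noteq> 0" using znz pN by (auto simp: cp_def)
  moreover have "inverse cp = (\<Prod>i\<in>{1..p-1}. inverse (z i ^ j i))"
    by (simp add: cp_def prod_inversef[symmetric] o_def)
  ultimately show ?thesis using main by (metis (no_types, lifting) mult.commute nonzero_eq_divide_eq divide_inverse)
qed

end



lemma prod_last2:
  fixes f :: "nat \<Rightarrow> 'a::comm_monoid_mult"
  assumes "2 \<le> p"
  shows "(\<Prod>i\<in>{1..p-1}. f i) = (\<Prod>i\<in>{1..p-2}. f i) * f (p-1)"
proof -
  obtain k where k: "p = Suc (Suc k)" using assms by (metis add_2_eq_Suc le_Suc_ex)
  show ?thesis by (simp add: k)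
qed

context setting begin

lemma Rt_eq:
  assumes p: "p \<in> {2..N}" and K: "K \<le> max (j (p-1)) (j p + m p)"
  shows "Rt p K = (\<Prod>i\<in>{1..p-1}. inverse (z i ^ j i)) * inverse (z p ^ K) * Rf N p s m j z K"
proof -
  define A where "A = brick_idx (p-1) m"
  define Bq where "Bq a = QS N (p+1) (a (p-1) + K)" for a :: "nat \<Rightarrow> nat"
  define C where "C = {n\<in>V. Hd (p-1) n \<and> Tl p n \<and> n p + j (p-1) = n (p-1) + K}"
  define cp where "cp = (\<Prod>i\<in>{1..p-1}. z i ^ j i) * z p ^ K"
  define \<phi> where "\<phi> = (\<lambda>(a::nat\<Rightarrow>nat, q::nat\<Rightarrow>nat). (\<lambda>i. if i \<in> {1..p-1} then a i + j i else if i = p then a (p-1) + K else q i))"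
  define \<psi> where "\<psi> = (\<lambda>n::nat\<Rightarrow>nat. ((\<lambda>i. if i \<in> {1..p-1} then n i - j i else 0), (\<lambda>i. if i \<in> {Suc p..N} then n i else 0)))"
  define f where "f a = (\<Prod>i\<in>{1..p-2}. inverse (z i ^ a i)) * inverse ((z (p-1) * z p) ^ a (p-1))
        * inverse ((\<Prod>i\<in>{1..p-1}. of_nat (a i + j i) powi s i) * of_nat (a (p-1) + K) powi s p)" for a :: "nat \<Rightarrow> nat"
  define h where "h q = (\<Prod>i\<in>{Suc p..N}. inverse (z i ^ q i * of_nat (q i) powi s i))" for q :: "nat \<Rightarrow> nat"
  have pN: "p \<le> N" "2 \<le> p" using p by auto
  have main: "infsum (\<lambda>a. f a * sum h (Bq a)) A = infsum (\<lambda>n. cp * g n) C"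
  proof (rule merge[where \<phi> = \<phi> and \<psi> = \<psi> and B = Bq])
    fix a q assume a: "a \<in> A" and q: "q \<in> Bq a"
    have a0: "\<And>i. i \<notin> {1..p-1} \<Longrightarrow> a i = 0" using a by (auto simp: A_def brick_idx_def)
    have ap: "1 \<le> a (p-1)" using a pN by (auto simp: A_def brick_idx_def)
    have qp: "p + 1 \<le> N \<Longrightarrow> q (p+1) \<le> a (p-1) + K" and q1: "\<And>i. i \<in> {Suc p..N} \<Longrightarrow> 1 \<le> q i"
      and q2: "\<And>i. i \<in> {Suc p..<N} \<Longrightarrow> q (i+1) \<le> q i" and q0: "\<And>i. i \<notin> {Suc p..N} \<Longrightarrow> q i = 0"
      using q by (auto simp: Bq_def QS_def)
    define n where "n = \<phi> (a, q)"
    have nlo: "\<And>i. i \<in> {1..p-1} \<Longrightarrow> n i = a i + j i" by (simp add: n_def \<phi>_def)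
    have nP: "n p = a (p-1) + K" using pN by (auto simp: n_def \<phi>_def)
    have nhi: "n i = q i" if "p < i" for i using that by (auto simp: n_def \<phi>_def)
    have n00: "n 0 = 0" using q0[of 0] pN by (simp add: n_def \<phi>_def)
    have npm: "n (p-1) = a (p-1) + j (p-1)" using nlo[of "p-1"] pN by simp
    note hf = head_fwd[OF a[unfolded A_def] nlo]
    have V0: "n i = 0" if "i \<notin> {1..N}" for i
    proof (cases "i = 0")
      case True then show ?thesis using n00 by simp
    next
      case False
      then have "p < i" "i \<notin> {Suc p..N}" using that pN by auto
      then show ?thesis using nhi q0 by simp
    qed
    have V1: "1 \<le> n i" if "i \<in> {1..N}" for i
    proof -
      consider "i \<le> p - 1" | "i = p" | "i > p" by linarith
      then show ?thesis
      proof cases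
        case 1 then show ?thesis using hf(3)[of i] that by auto
      next
        case 2 then show ?thesis using nP ap by simp
      next
        case 3 then show ?thesis using nhi[OF 3] q1[of i] that by auto
      qed
    qed
    have tl: "n i \<le> n (i-1)" if i: "i \<in> {Suc p..N}" for i
    proof (cases "i = Suc p")
      case True then show ?thesis using nhi[of i] qp nP i by auto
    next
      case False
      then have "i - 1 \<in> {Suc p..<N}" "p < i" "p < i - 1" using i by auto
      then show ?thesis using q2[of "i-1"] nhi[of i] nhi[of "i-1"] by auto
    qed
    have V2: "n i \<le> n (i-1) + j i + m i" if i: "i \<in> {2..N}" for i
    proof -
      consider "i \<le> p - 1" | "i = p" | "i > p" by linarith
      then show ?thesis
      proof cases
        case 1 then show ?thesis using hf(2)[of i] i by auto
      next
        case 2 then show ?thesis using nP npm K by auto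
      next
        case 3 then show ?thesis using tl[of i] i by auto
      qed
    qed
    have T: "Tl p n" unfolding Tl_def using tl by blast
    have "n \<in> V" unfolding V_def using V0 V1 V2 by blast
    moreover have "n p + j (p-1) = n (p-1) + K" using nP npm by simp
    ultimately show "\<phi> (a, q) \<in> C" using hf(1) T by (simp add: C_def n_def)
    show "\<psi> (\<phi> (a, q)) = (a, q)"
    proof -
      have "(\<lambda>i. if i \<in> {1..p-1} then n i - j i else 0) = a"
      proof
        fix i show "(if i \<in> {1..p-1} then n i - j i else 0) = a i" using nlo[of i] a0[of i] by auto
      qed
      moreover have "(\<lambda>i. if i \<in> {Suc p..N} then n i else 0) = q"
      proof
        fix i show "(if i \<in> {Suc p..N} then n i else 0) = q i"
          using nhi[of i] q0[of i] by auto
      qed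
      ultimately show ?thesis unfolding n_def[symmetric] \<psi>_def by simp
    qed
    have "cp * g n = f a * h q"
    proof -
      define Xp where "Xp = (\<Prod>i\<in>{1..p-1}. (of_nat (a i + j i) :: complex) powi s i)"
      define Y where "Y = (of_nat (a (p-1) + K) :: complex) powi s p"
      have "g n = (\<Prod>i\<in>{1..p-1}. inverse (z i ^ n i * of_nat (n i) powi s i)) * (\<Prod>i\<in>{p..N}. inverse (z i ^ n i * of_nat (n i) powi s i))"
        unfolding g_def by (rule prod_split_at) (use pN in auto)
      also have "(\<Prod>i\<in>{1..p-1}. inverse (z i ^ n i * of_nat (n i) powi s i)) = (\<Prod>i\<in>{1..p-1}. inverse (z i ^ (a i + j i) * of_nat (a i + j i) powi s i))"
        by (rule prod.cong) (simp_all add: nlo)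
      also have "(\<Prod>i\<in>{p..N}. inverse (z i ^ n i * of_nat (n i) powi s i)) = inverse (z p ^ (a (p-1) + K) * Y) * h q"
        unfolding prod.atLeast_Suc_atMost[OF pN(1)] h_def Y_def nP
        by (rule arg_cong[where f = "\<lambda>x. _ * x"], rule prod.cong) (use nhi in auto)
      finally have "cp * g n = ((\<Prod>i\<in>{1..p-1}. z i ^ j i) * (\<Prod>i\<in>{1..p-1}. inverse (z i ^ (a i + j i) * of_nat (a i + j i) powi s i)))
                  * (z p ^ K * inverse (z p ^ (a (p-1) + K) * Y)) * h q"
        by (simp add: cp_def mult_ac)
      also have "(\<Prod>i\<in>{1..p-1}. z i ^ j i) * (\<Prod>i\<in>{1..p-1}. inverse (z i ^ (a i + j i) * of_nat (a i + j i) powi s i))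
                 = (\<Prod>i\<in>{1..p-1}. inverse (z i ^ a i * of_nat (a i + j i) powi s i))"
        by (rule prod_shift_j) (use znz pN in auto)
      also have "\<dots> = (\<Prod>i\<in>{1..p-1}. inverse (z i ^ a i)) * inverse Xp"
        by (simp add: Xp_def prod.distrib inverse_mult_distrib prod_inversef[symmetric] o_def)
      also have "(\<Prod>i\<in>{1..p-1}. inverse (z i ^ a i)) = (\<Prod>i\<in>{1..p-2}. inverse (z i ^ a i)) * inverse (z (p-1) ^ a (p-1))"
        by (rule prod_last2[OF pN(2)])
      also have "z p ^ K * inverse (z p ^ (a (p-1) + K) * Y) = inverse (z p ^ a (p-1)) * inverse Y"
        using znz[of p] pN by (simp add: power_add inverse_mult_distrib)
      finally have cg: "cp * g n = (\<Prod>i\<in>{1..p-2}. inverse (z i ^ a i)) * inverse (z (p-1) ^ a (p-1)) * inverse Xp *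
           (inverse (z p ^ a (p - 1)) * inverse Y) * h q" .
      have fa: "f a = (\<Prod>i\<in>{1..p-2}. inverse (z i ^ a i)) * inverse ((z (p-1) * z p) ^ a (p-1)) * inverse (Xp * Y)"
        unfolding f_def Xp_def Y_def by (rule refl)
      show ?thesis unfolding fa cg by (simp add: power_mult_distrib inverse_mult_distrib mult_ac)
    qed
    then show "cp * g (\<phi> (a, q)) = f a * h q" by (simp add: n_def)
  next
    fix n assume n: "n \<in> C"
    have nV: "n \<in> V" and nH: "Hd (p-1) n" and nT: "Tl p n" and nR: "n p + j (p-1) = n (p-1) + K"
      using n by (auto simp: C_def)
    have n0: "\<And>i. i \<notin> {1..N} \<Longrightarrow> n i = 0" and n1: "\<And>i. i \<in> {1..N} \<Longrightarrow> 1 \<le> n i" using nV by (auto simp: V_def)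
    have bg: "\<And>i. i \<in> {1..p-1} \<Longrightarrow> j i < n i" using nH Hd_gt by blast
    have bpm: "j (p-1) < n (p-1)" using bg[of "p-1"] pN by auto
    have tl: "n (i + 1) \<le> n i" if "i \<in> {p..<N}" for i
      using nT that pN unfolding Tl_def by (auto dest!: bspec[of _ _ "i+1"])
    define a' where "a' = (\<lambda>i. if i \<in> {1..p-1} then n i - j i else 0)"
    have a'p: "a' (p-1) = n (p-1) - j (p-1)" using pN by (simp add: a'_def)
    have "(\<lambda>i. if i \<in> {Suc p..N} then n i else 0) \<in> Bq a'"
    proof -
      have "n (p+1) \<le> n (p-1) - j (p-1) + K" if "p + 1 \<le> N"
        using tl[of p] that nR bpm by auto
      moreover have "n (i + 1) \<le> n i" if "i \<in> {Suc p..<N}" for i using tl[of i] that by auto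
      ultimately show ?thesis using n1 pN unfolding Bq_def QS_def a'p by auto
    qed
    then show "\<psi> n \<in> Sigma A Bq" using head_bwd[OF nH] by (simp add: \<psi>_def A_def a'_def)
    show "\<phi> (\<psi> n) = n"
    proof
      fix i
      consider "i \<in> {1..p-1}" | "i = p" | "i \<notin> {1..p-1}" "i \<noteq> p" by blast
      then show "\<phi> (\<psi> n) i = n i"
      proof cases
        case 1 then show ?thesis using bg[of i] by (simp add: \<phi>_def \<psi>_def)
      next
        case 2 then show ?thesis using nR bpm pN by (auto simp: \<phi>_def \<psi>_def)
      next
        case 3 then show ?thesis using n0[of i] pN by (auto simp: \<phi>_def \<psi>_def)
      qed
    qed
  next
    show "(\<lambda>n. cp * g n) summable_on C"
      by (rule summable_on_cmult_right, rule g_summable_sub) (auto simp: C_def)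
  next
    fix a show "finite (Bq a)" unfolding Bq_def by (rule QS_finite) simp
  qed
  have "infsum (\<lambda>a. f a * sum h (Bq a)) A = Rf N p s m j z K"
    by (simp add: Rf_def A_def f_def h_def Bq_def Qf_QS)
  moreover have "infsum (\<lambda>n. cp * g n) C = cp * Rt p K"
    by (simp add: infsum_cmult_right' Rt_def C_def)
  moreover have "cp \<noteq> 0" using znz pN by (auto simp: cp_def)
  moreover have "inverse cp = (\<Prod>i\<in>{1..p-1}. inverse (z i ^ j i)) * inverse (z p ^ K)"
    by (simp add: cp_def prod_inversef[symmetric] o_def inverse_mult_distrib)
  ultimately show ?thesis using main by (metis (no_types, lifting) mult.commute nonzero_eq_divide_eq divide_inverse)
qed

end



lemma telescope_nat:
  fixes f :: "nat \<Rightarrow> 'a::ab_group_add"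
  shows "(\<Sum>p\<in>{1..n}. f (p-1) - f p) = f 0 - f n"
  by (induction n) auto

context setting begin

lemma part1:
  "Brick N s m j z =
     (\<Prod>i\<in>{1..N}. z i ^ j i) * La N s (\<lambda>i. inverse (z i))
     - (\<Sum>p\<in>{1..N}. (\<Prod>i\<in>{p..N}. z i ^ j i) * Qf N p s (j p) z * Brick (p - 1) s m j z)
     + (\<Sum>p\<in>{2..N}. of_int (eps (int (j (p - 1))) (int (j p + m p)))
          * (\<Prod>i\<in>{p..N}. z i ^ j i)
          * (\<Sum>k\<in>{min (j (p - 1)) (j p + m p) + 1 .. max (j (p - 1)) (j p + m p)}.
               inverse (z p ^ k) * Rf N p s m j z k))"
proof -
  define P where "P = (\<Prod>i\<in>{1..N}. z i ^ j i)"
  define cinv where "cinv p = (\<Prod>i\<in>{1..p-1}. inverse (z i ^ j i))" for p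
  define c where "c p = (if 2 \<le> p then of_int (eps (int (j (p-1))) (int (j p + m p))) else (0::complex))" for p
  define Ks where "Ks p = {min (j (p - 1)) (j p + m p) + 1 .. max (j (p - 1)) (j p + m p)}" for p
  define Pt where "Pt p = (\<Prod>i\<in>{p..N}. z i ^ j i)" for p
  have PC: "P * cinv p = Pt p" if p: "p \<in> {1..N}" for p
  proof -
    have "P = (\<Prod>i\<in>{1..p-1}. z i ^ j i) * Pt p" unfolding P_def Pt_def
      by (rule prod_split_at) (use p in auto)
    moreover have "(\<Prod>i\<in>{1..p-1}. z i ^ j i) * cinv p = 1"
      unfolding cinv_def prod.distrib[symmetric]
      by (rule prod.neutral) (use znz p in auto)
    ultimately show ?thesis by (simp add: mult_ac)
  qed
  have XN: "P * X N = Brick N s m j z"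
  proof -
    have "P * (\<Prod>i\<in>{1..N}. inverse (z i ^ j i)) = 1"
      unfolding P_def prod.distrib[symmetric] by (rule prod.neutral) (use znz in auto)
    then show ?thesis by (simp add: X_N mult.assoc[symmetric])
  qed
  have QP: "P * Qt p = Pt p * Qf N p s (j p) z * Brick (p-1) s m j z" if p: "p \<in> {1..N}" for p
  proof -
    have "Qt p = cinv p * (Brick (p-1) s m j z * Qf N p s (j p) z)" unfolding cinv_def by (rule Qt_eq[OF p])
    then have "P * Qt p = (P * cinv p) * (Brick (p-1) s m j z * Qf N p s (j p) z)" by (simp only: mult.assoc)
    then show ?thesis using PC[OF p] by (simp add: mult_ac)
  qed
  have RP: "P * (\<Sum>K\<in>Ks p. Rt p K) = Pt p * (\<Sum>K\<in>Ks p. inverse (z p ^ K) * Rf N p s m j z K)"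
    if p: "p \<in> {2..N}" for p
  proof -
    have p1: "p \<in> {1..N}" using p by auto
    have "P * (\<Sum>K\<in>Ks p. Rt p K) = (\<Sum>K\<in>Ks p. P * Rt p K)" by (simp add: sum_distrib_left)
    also have "\<dots> = (\<Sum>K\<in>Ks p. Pt p * (inverse (z p ^ K) * Rf N p s m j z K))"
    proof (rule sum.cong)
      fix K assume K: "K \<in> Ks p"
      then have "K \<le> max (j (p-1)) (j p + m p)" by (simp add: Ks_def)
      then show "P * Rt p K = Pt p * (inverse (z p ^ K) * Rf N p s m j z K)"
      proof -
        have "Rt p K = cinv p * inverse (z p ^ K) * Rf N p s m j z K" unfolding cinv_def
          by (rule Rt_eq[OF p]) fact
        then have "P * Rt p K = (P * cinv p) * (inverse (z p ^ K) * Rf N p s m j z K)" by (simp only: mult.assoc)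
        then show ?thesis using PC[OF p1] by simp
      qed
    qed simp
    finally show ?thesis by (simp add: sum_distrib_left)
  qed
  have tel: "X 0 - X N = (\<Sum>p\<in>{1..N}. Qt p - c p * (\<Sum>K\<in>Ks p. Rt p K))"
  proof -
    have "X 0 - X N = (\<Sum>p\<in>{1..N}. X (p-1) - X p)" by (rule telescope_nat[symmetric])
    also have "\<dots> = (\<Sum>p\<in>{1..N}. Qt p - c p * (\<Sum>K\<in>Ks p. Rt p K))"
    proof (rule sum.cong)
      fix p assume p: "p \<in> {1..N}"
      show "X (p-1) - X p = Qt p - c p * (\<Sum>K\<in>Ks p. Rt p K)"
        using X_step[OF p] unfolding c_def Ks_def by (simp add: algebra_simps)
    qed simp
    finally show ?thesis .
  qed
  have "P * X 0 - P * X N = (\<Sum>p\<in>{1..N}. P * Qt p) - (\<Sum>p\<in>{1..N}. c p * (P * (\<Sum>K\<in>Ks p. Rt p K)))"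
    using arg_cong[OF tel, of "\<lambda>x. P * x"]
    by (simp add: right_diff_distrib sum_distrib_left sum_subtractf mult_ac)
  also have "(\<Sum>p\<in>{1..N}. P * Qt p) = (\<Sum>p\<in>{1..N}. Pt p * Qf N p s (j p) z * Brick (p-1) s m j z)"
    by (rule sum.cong) (simp_all add: QP)
  also have "(\<Sum>p\<in>{1..N}. c p * (P * (\<Sum>K\<in>Ks p. Rt p K)))
       = (\<Sum>p\<in>{2..N}. c p * (P * (\<Sum>K\<in>Ks p. Rt p K)))"
    using N1 by (simp add: sum.atLeast_Suc_atMost c_def numeral_2_eq_2)
  also have "\<dots> = (\<Sum>p\<in>{2..N}. of_int (eps (int (j (p - 1))) (int (j p + m p))) * Pt p
                     * (\<Sum>K\<in>Ks p. inverse (z p ^ K) * Rf N p s m j z K))"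
    by (rule sum.cong) (simp_all add: RP c_def mult_ac)
  finally have "P * X 0 - P * X N = (\<Sum>p\<in>{1..N}. Pt p * Qf N p s (j p) z * Brick (p-1) s m j z)
      - (\<Sum>p\<in>{2..N}. of_int (eps (int (j (p - 1))) (int (j p + m p))) * Pt p
                     * (\<Sum>K\<in>Ks p. inverse (z p ^ K) * Rf N p s m j z K))" .
  moreover have P1: "Pt 1 = P" by (simp add: Pt_def P_def)
  ultimately show ?thesis unfolding XN X_0 P_def[symmetric] Pt_def[symmetric] Ks_def[symmetric]
    by (simp add: algebra_simps)
qed

end



lemma brick_summable:
  fixes w :: "nat \<Rightarrow> complex"
  assumes r: "1 \<le> r" and w1: "1 < cmod (w 1)" and wi: "\<And>i. i \<in> {2..r} \<Longrightarrow> 1 \<le> cmod (w i)"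
  shows "(\<lambda>k. \<Prod>i\<in>{1..r}. inverse (w i ^ k i * of_nat (k i + jj i) powi ss i)) summable_on brick_idx r mm"
proof -
  define B where "B = (\<Sum>i\<in>{1..r}. nat \<bar>ss i\<bar>)"
  define D where "D = (\<Sum>i\<in>{1..r}. real (jj i))"
  have sB: "nat \<bar>ss i\<bar> \<le> B" if "i \<in> {1..r}" for i
    unfolding B_def using that by (intro member_le_sum) auto
  have sD: "real (jj i) \<le> D" if "i \<in> {1..r}" for i
    unfolding D_def using that by (intro member_le_sum) auto
  have D0: "0 \<le> D" unfolding D_def by (simp add: sum_nonneg)
  have wge: "1 \<le> cmod (w i)" if "i \<in> {1..r}" for i using w1 wi that by (cases "i = 1") auto
  have "(\<lambda>k. \<Prod>i\<in>{1..r}. (\<lambda>i x. inverse (w i ^ x * of_nat (x + jj i) powi ss i)) i (k i)) summable_on brick_idx r mm"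
  proof (rule prod_summable[where q = "inverse (cmod (w 1))" and D = D and B = B and M = "\<Sum>l\<in>{1..r}. mm l"])
    show "1 \<le> r" by (rule r)
    have "w 1 \<noteq> 0" using w1 by (metis norm_zero not_one_less_zero)
    then show "0 < inverse (cmod (w 1))" by simp
    show "inverse (cmod (w 1)) < 1" using w1 by (simp add: inverse_less_1_iff)
    show "0 \<le> D" unfolding D_def by (simp add: sum_nonneg)
  next
    fix k i assume k: "k \<in> brick_idx r mm"
    have ch: "\<forall>i\<in>{2..r}. k i \<le> k (i - 1) + mm i" using k by (auto simp: brick_idx_def)
    show "(i \<notin> {1..r} \<longrightarrow> k i = 0) \<and> (i \<in> {1..r} \<longrightarrow> 1 \<le> k i \<and> k i \<le> k 1 + (\<Sum>l\<in>{1..r}. mm l))"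
      using k chain_bound[OF ch, of i] by (auto simp: brick_idx_def)
  next
    fix i x assume i: "i \<in> {1..r}" and x: "(1::nat) \<le> x"
    have "norm (inverse (w i ^ x * of_nat (x + jj i) powi ss i)) \<le> (real x + D)^B * inverse (cmod (w i))^x"
      using factor_bound2[OF x wge[OF i] sD[OF i] sB[OF i]] .
    also have "\<dots> \<le> (real x + D)^B * (if i = 1 then inverse (cmod (w 1))^x else 1)"
      using inv_pow_le1[OF wge[OF i], of x] D0 by (cases "i = 1") (auto intro!: mult_left_le)
    finally show "norm ((\<lambda>i x. inverse (w i ^ x * of_nat (x + jj i) powi ss i)) i x) \<le> (real x + D)^B * (if i = 1 then inverse (cmod (w 1))^x else 1)"
      by simp
  qed
  then show ?thesis by simp
qed

lemma sl_summable:
  fixes f :: "'b \<Rightarrow> 'a \<Rightarrow> complex"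
  assumes "\<And>x. x \<in> set L \<Longrightarrow> f x summable_on A"
  shows "(\<lambda>k. \<Sum>x\<leftarrow>L. f x k) summable_on A \<and> infsum (\<lambda>k. \<Sum>x\<leftarrow>L. f x k) A = (\<Sum>x\<leftarrow>L. infsum (f x) A)"
  using assms
proof (induction L)
  case Nil then show ?case by simp
next
  case (Cons a L)
  then have IH: "(\<lambda>k. \<Sum>x\<leftarrow>L. f x k) summable_on A" "infsum (\<lambda>k. \<Sum>x\<leftarrow>L. f x k) A = (\<Sum>x\<leftarrow>L. infsum (f x) A)"
    by auto
  have fa: "f a summable_on A" using Cons.prems by auto
  show ?case using IH fa by (simp add: infsum_add summable_on_add)
qed

lemma sl_mult:
  "(\<Sum>(c,sh,e)\<leftarrow>L. (of_rat c :: complex) * f sh e) * \<alpha> = (\<Sum>(c,sh,e)\<leftarrow>L. of_rat c * (f sh e * \<alpha>))"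
  by (induction L) (auto simp: algebra_simps)

definition sP :: "nat \<Rightarrow> (nat \<Rightarrow> int) \<Rightarrow> int \<Rightarrow> nat \<Rightarrow> int" where
  "sP p s e = (\<lambda>i. if i < p-1 then s i else if i = p-1 then e else s (i+1))"
definition mP :: "nat \<Rightarrow> (nat \<Rightarrow> nat) \<Rightarrow> nat \<Rightarrow> nat \<Rightarrow> nat" where
  "mP p m K = (\<lambda>i. if i < p then m i else if i = p then K else 0)"
definition jP :: "nat \<Rightarrow> (nat \<Rightarrow> nat) \<Rightarrow> nat \<Rightarrow> nat \<Rightarrow> nat" where
  "jP p j sh = (\<lambda>i. if i < p-1 then j i else if i = p-1 then sh else 0)"
definition SP :: "nat \<Rightarrow> nat \<Rightarrow> nat set" where
  "SP p = (\<lambda>i. if i < p-1 then {i} else if i = p-1 then {p-1, p} else {i+1})"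

context setting begin

definition wP :: "nat \<Rightarrow> nat \<Rightarrow> complex" where
  "wP p i = (\<Prod>l\<in>SP p i. z l)"

lemma wP_lo: "i < p - 1 \<Longrightarrow> wP p i = z i" by (simp add: wP_def SP_def)
lemma wP_mid: "2 \<le> p \<Longrightarrow> wP p (p-1) = z (p-1) * z p" by (simp add: wP_def SP_def)
lemma wP_hi: "p - 1 < i \<Longrightarrow> wP p i = z (i+1)" by (simp add: wP_def SP_def)

lemma wP_ge:
  assumes p: "p \<in> {2..N}" and i: "i \<in> {1..N-1}"
  shows "1 \<le> cmod (wP p i)"
proof -
  have "SP p i \<subseteq> {1..N}" using p i by (auto simp: SP_def)
  then have "\<forall>l\<in>SP p i. 1 \<le> cmod (z l)" using zge by blast
  then show ?thesis unfolding wP_def prod_norm[symmetric] by (intro prod_ge_1) auto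
qed

lemma wP_1:
  assumes p: "p \<in> {2..N}"
  shows "1 < cmod (wP p 1)"
proof (cases "p = 2")
  case True
  then have "wP p 1 = z 1 * z 2" using wP_mid[of p] by simp
  moreover have "1 \<le> cmod (z 2)" using zi[of 2] p by auto
  moreover have "cmod (z 1) * 1 \<le> cmod (z 1) * cmod (z 2)"
    using \<open>1 \<le> cmod (z 2)\<close> by (intro mult_left_mono) auto
  ultimately show ?thesis using z1 by (simp add: norm_mult)
next
  case False
  then show ?thesis using wP_lo[of 1 p] p z1 by auto
qed

definition BS :: "nat \<Rightarrow> nat \<Rightarrow> int \<Rightarrow> (nat \<Rightarrow> nat) \<Rightarrow> complex" where
  "BS p sh e k = (\<Prod>i\<in>{1..N-1}. inverse (wP p i ^ k i * of_nat (k i + jP p j sh i) powi sP p s e i))"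

lemma BS_summable:
  assumes p: "p \<in> {2..N}"
  shows "BS p sh e summable_on brick_idx (N-1) (mP p m K)"
  unfolding BS_def[abs_def]
  by (rule brick_summable) (use p wP_1 wP_ge in auto)

lemma Brick_BS: "Brick (N-1) (sP p s e) (mP p m K) (jP p j sh) (wP p) = infsum (BS p sh e) (brick_idx (N-1) (mP p m K))"
  by (simp add: Brick_def BS_def[abs_def])

end



lemma sl_summable2:
  fixes F :: "nat \<Rightarrow> int \<Rightarrow> 'a \<Rightarrow> complex"
  assumes "\<And>c sh e. (c, sh, e) \<in> set L \<Longrightarrow> F sh e summable_on A"
  shows "(\<lambda>k. \<Sum>(c,sh,e)\<leftarrow>L. (of_rat c :: complex) * F sh e k) summable_on A \<and>
         infsum (\<lambda>k. \<Sum>(c,sh,e)\<leftarrow>L. (of_rat c :: complex) * F sh e k) A = (\<Sum>(c,sh,e)\<leftarrow>L. of_rat c * infsum (F sh e) A)"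
  using assms
proof (induction L)
  case Nil then show ?case by simp
next
  case (Cons a L)
  obtain c sh e where a: "a = (c, sh, e)" by (cases a) auto
  then have IH: "(\<lambda>k. \<Sum>(c,sh,e)\<leftarrow>L. (of_rat c :: complex) * F sh e k) summable_on A"
       "infsum (\<lambda>k. \<Sum>(c,sh,e)\<leftarrow>L. (of_rat c :: complex) * F sh e k) A = (\<Sum>(c,sh,e)\<leftarrow>L. of_rat c * infsum (F sh e) A)"
    using Cons by auto
  have fa: "(\<lambda>k. of_rat c * F sh e k) summable_on A" using Cons.prems a by (auto intro: summable_on_cmult_right)
  show ?case using IH fa a by (simp add: infsum_add summable_on_add infsum_cmult_right')
qed

context setting begin

definition Rest :: "nat \<Rightarrow> (nat \<Rightarrow> nat) \<Rightarrow> complex" where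
  "Rest p k = (\<Prod>i\<in>{1..N-1} - {p-1}. inverse (wP p i ^ k i * of_nat (k i + jP p j 0 i) powi sP p s 0 i))"

lemma BS_split:
  assumes p: "p \<in> {2..N}"
  shows "BS p sh e k = inverse (wP p (p-1) ^ k (p-1) * of_nat (k (p-1) + sh) powi e) * Rest p k"
proof -
  have pm: "p - 1 \<in> {1..N-1}" using p by auto
  have e1: "jP p j sh (p-1) = sh" "sP p s e (p-1) = e" by (simp_all add: jP_def sP_def)
  have e2: "jP p j sh i = jP p j 0 i" "sP p s e i = sP p s 0 i" if "i \<noteq> p - 1" for i
    using that by (simp_all add: jP_def sP_def)
  show ?thesis unfolding BS_def Rest_def prod.remove[OF finite_atLeastAtMost pm] e1
    by (rule arg_cong2[where f = "(*)"], simp, rule prod.cong) (auto simp: e2)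
qed

definition Gk :: "nat \<Rightarrow> nat \<Rightarrow> (nat \<Rightarrow> nat) \<Rightarrow> complex" where
  "Gk p K k = BS p (j (p-1)) (s (p-1)) k * inverse (of_nat (k (p-1) + K) powi s p)"

lemma G_decomp:
  assumes p: "p \<in> {2..N}" and L: "PF_ok (j (p-1)) K (s (p-1)) (s p) L"
    and k: "k \<in> brick_idx (N-1) (mP p m K)"
  shows "Gk p K k = (\<Sum>(c,sh,e)\<leftarrow>L. of_rat c * BS p sh e k)"
proof -
  define x where "x = k (p-1)"
  have pm: "p - 1 \<in> {1..N-1}" using p by auto
  have x: "1 \<le> x" using k pm unfolding brick_idx_def x_def by blast
  define W where "W = wP p (p-1)"
  have pf: "inverse ((of_nat (x + j (p-1)) :: complex) powi s (p-1) * of_nat (x + K) powi s p)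
      = (\<Sum>(c,sh,e)\<leftarrow>L. of_rat c * inverse (of_nat (x+sh) powi e))"
    using L x unfolding PF_ok_def by blast
  have "Gk p K k = inverse (W ^ x * of_nat (x + j (p-1)) powi s (p-1)) * Rest p k * inverse (of_nat (x + K) powi s p)"
    unfolding Gk_def BS_split[OF p] W_def x_def ..
  also have "\<dots> = inverse ((of_nat (x + j (p-1)) :: complex) powi s (p-1) * of_nat (x + K) powi s p) * (inverse (W ^ x) * Rest p k)"
    by (simp add: inverse_mult_distrib mult_ac)
  also have "\<dots> = (\<Sum>(c,sh,e)\<leftarrow>L. of_rat c * (inverse (of_nat (x+sh) powi e) * (inverse (W ^ x) * Rest p k)))"
    unfolding pf sl_mult ..
  also have "\<dots> = (\<Sum>(c,sh,e)\<leftarrow>L. of_rat c * BS p sh e k)"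
    unfolding BS_split[OF p] W_def x_def by (simp add: inverse_mult_distrib mult_ac)
  finally show ?thesis .
qed

lemma Rf_G:
  assumes p: "p \<in> {2..N}" and summ: "Gk p K summable_on brick_idx (N-1) (mP p m K)"
  shows "Rf N p s m j z K = infsum (Gk p K) (brick_idx (N-1) (mP p m K))"
proof -
  define A where "A = brick_idx (p-1) m"
  define Bq where "Bq a = QS N (p+1) (a (p-1) + K)" for a :: "nat \<Rightarrow> nat"
  define C where "C = brick_idx (N-1) (mP p m K)"
  define \<phi> where "\<phi> = (\<lambda>(a::nat\<Rightarrow>nat, q::nat\<Rightarrow>nat). (\<lambda>i. if i \<le> p-1 then a i else q (i+1)))"
  define \<psi> where "\<psi> = (\<lambda>k::nat\<Rightarrow>nat. ((\<lambda>i. if i \<le> p-1 then k i else 0), (\<lambda>i. if i \<in> {Suc p..N} then k (i-1) else 0)))"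
  define f where "f a = (\<Prod>i\<in>{1..p-2}. inverse (z i ^ a i)) * inverse ((z (p-1) * z p) ^ a (p-1))
        * inverse ((\<Prod>i\<in>{1..p-1}. of_nat (a i + j i) powi s i) * of_nat (a (p-1) + K) powi s p)" for a :: "nat \<Rightarrow> nat"
  define h where "h q = (\<Prod>i\<in>{Suc p..N}. inverse (z i ^ q i * of_nat (q i) powi s i))" for q :: "nat \<Rightarrow> nat"
  have pN: "p \<le> N" "2 \<le> p" using p by auto
  have main: "infsum (\<lambda>a. f a * sum h (Bq a)) A = infsum (Gk p K) C"
  proof (rule merge[where \<phi> = \<phi> and \<psi> = \<psi> and B = Bq])
    fix a q assume a: "a \<in> A" and q: "q \<in> Bq a"
    have a0: "\<And>i. i \<notin> {1..p-1} \<Longrightarrow> a i = 0" and a1: "\<And>i. i \<in> {1..p-1} \<Longrightarrow> 1 \<le> a i"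
      and a2: "\<And>i. i \<in> {2..p-1} \<Longrightarrow> a i \<le> a (i-1) + m i"
      using a by (auto simp: A_def brick_idx_def)
    have qp: "p + 1 \<le> N \<Longrightarrow> q (p+1) \<le> a (p-1) + K" and q1: "\<And>i. i \<in> {Suc p..N} \<Longrightarrow> 1 \<le> q i"
      and q2: "\<And>i. i \<in> {Suc p..<N} \<Longrightarrow> q (i+1) \<le> q i" and q0: "\<And>i. i \<notin> {Suc p..N} \<Longrightarrow> q i = 0"
      using q by (auto simp: Bq_def QS_def)
    define k where "k = \<phi> (a, q)"
    have klo: "k i = a i" if "i \<le> p - 1" for i using that by (simp add: k_def \<phi>_def)
    have khi: "k i = q (i+1)" if "p - 1 < i" for i using that by (simp add: k_def \<phi>_def)
    have "k \<in> C" unfolding C_def brick_idx_def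
    proof (intro CollectI conjI ballI allI impI)
      fix i assume i: "i \<in> {1..N-1}"
      show "1 \<le> k i"
      proof (cases "i \<le> p - 1")
        case True then show ?thesis using klo a1 i by auto
      next
        case False
        then have "i + 1 \<in> {Suc p..N}" using i pN by auto
        then show ?thesis using khi[of i] q1[of "i+1"] False by auto
      qed
    next
      fix i assume i: "i \<in> {2..N-1}"
      consider "i \<le> p - 1" | "i = p" | "p < i" by linarith
      then show "k i \<le> k (i - 1) + mP p m K i"
      proof cases
        case 1 then show ?thesis using klo[of i] klo[of "i-1"] a2[of i] i by (auto simp: mP_def)
      next
        case 2 then show ?thesis using khi[of p] klo[of "p-1"] qp i pN by (auto simp: mP_def)
      next
        case 3 then show ?thesis using khi[of i] khi[of "i-1"] q2[of i] i by (auto simp: mP_def)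
      qed
    next
      fix i assume i: "i \<notin> {1..N-1}"
      show "k i = 0"
      proof (cases "i = 0")
        case True then show ?thesis using klo[of 0] a0[of 0] by simp
      next
        case False
        then have "p - 1 < i" "i + 1 \<notin> {Suc p..N}" using i pN by auto
        then show ?thesis using khi[of i] q0[of "i+1"] by simp
      qed
    qed
    then show "\<phi> (a, q) \<in> C" by (simp add: k_def)
    show "\<psi> (\<phi> (a, q)) = (a, q)"
    proof -
      have "(\<lambda>i. if i \<le> p-1 then k i else 0) = a"
      proof
        fix i show "(if i \<le> p-1 then k i else 0) = a i" using klo[of i] a0[of i] by auto
      qed
      moreover have "(\<lambda>i. if i \<in> {Suc p..N} then k (i-1) else 0) = q"
      proof
        fix i show "(if i \<in> {Suc p..N} then k (i-1) else 0) = q i"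
          using khi[of "i-1"] q0[of i] pN by auto
      qed
      ultimately show ?thesis unfolding k_def[symmetric] \<psi>_def by simp
    qed
    have "Gk p K k = f a * h q"
    proof -
      define T where "T i = inverse (wP p i ^ k i * of_nat (k i + jP p j (j (p-1)) i) powi sP p s (s (p-1)) i)" for i
      define Y where "Y = (of_nat (a (p-1) + K) :: complex) powi s p"
      define Xp where "Xp i = (of_nat (a i + j i) :: complex) powi s i" for i
      have "BS p (j (p-1)) (s (p-1)) k = (\<Prod>i\<in>{1..p-1}. T i) * (\<Prod>i\<in>{p..N-1}. T i)"
        unfolding BS_def T_def by (rule prod_split_at) (use pN in auto)
      also have "(\<Prod>i\<in>{1..p-1}. T i) = (\<Prod>i\<in>{1..p-2}. T i) * T (p-1)" by (rule prod_last2[OF pN(2)])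
      also have "(\<Prod>i\<in>{1..p-2}. T i) = (\<Prod>i\<in>{1..p-2}. inverse (z i ^ a i * Xp i))"
        by (rule prod.cong) (auto simp: T_def Xp_def klo wP_lo jP_def sP_def)
      also have "T (p-1) = inverse ((z (p-1) * z p) ^ a (p-1) * Xp (p-1))"
        using pN by (simp add: T_def Xp_def klo wP_mid[OF pN(2), simplified] jP_def sP_def)
      also have "(\<Prod>i\<in>{p..N-1}. T i) = (\<Prod>i\<in>{p..N-1}. inverse (z (Suc i) ^ q (Suc i) * of_nat (q (Suc i)) powi s (Suc i)))"
        by (rule prod.cong) (use pN in \<open>auto simp: T_def khi wP_hi jP_def sP_def\<close>)
      also have "\<dots> = h q"
        unfolding h_def using prod.shift_bounds_cl_Suc_ivl[of "\<lambda>i. inverse (z i ^ q i * of_nat (q i) powi s i)" p "N-1"] pN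
        by simp
      finally have BSe: "BS p (j (p-1)) (s (p-1)) k = (\<Prod>i\<in>{1..p-2}. inverse (z i ^ a i * Xp i)) * inverse ((z (p-1) * z p) ^ a (p-1) * Xp (p-1)) * h q" .
      have fa: "f a = (\<Prod>i\<in>{1..p-2}. inverse (z i ^ a i)) * inverse ((z (p-1) * z p) ^ a (p-1))
        * inverse ((\<Prod>i\<in>{1..p-2}. Xp i) * Xp (p-1) * Y)"
        unfolding f_def Xp_def Y_def prod_last2[OF pN(2), of "\<lambda>i. (of_nat (a i + j i) :: complex) powi s i"] ..
      have Ge: "Gk p K k = BS p (j (p-1)) (s (p-1)) k * inverse Y"
        unfolding Gk_def Y_def using klo[of "p-1"] by simp
      show ?thesis unfolding Ge BSe fa
        by (simp add: prod.distrib inverse_mult_distrib prod_inversef[symmetric] o_def mult_ac)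
    qed
    then show "Gk p K (\<phi> (a, q)) = f a * h q" by (simp add: k_def)
  next
    fix k assume k: "k \<in> C"
    have k0: "\<And>i. i \<notin> {1..N-1} \<Longrightarrow> k i = 0" and k1: "\<And>i. i \<in> {1..N-1} \<Longrightarrow> 1 \<le> k i"
      and k2: "\<And>i. i \<in> {2..N-1} \<Longrightarrow> k i \<le> k (i-1) + mP p m K i"
      using k by (auto simp: C_def brick_idx_def)
    define a' where "a' = (\<lambda>i. if i \<le> p-1 then k i else 0)"
    have "a' \<in> A" unfolding A_def brick_idx_def
    proof (intro CollectI conjI ballI allI impI)
      fix i assume "i \<in> {1..p-1}" then show "1 \<le> a' i" using k1[of i] pN by (auto simp: a'_def)
    next
      fix i assume i: "i \<in> {2..p-1}"
      then have "i \<in> {2..N-1}" "i < p" "i \<le> p - 1" "i - 1 \<le> p - 1" using pN by auto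
      then show "a' i \<le> a' (i-1) + m i"
        using k2[of i] by (simp add: a'_def mP_def)
    next
      fix i assume i: "i \<notin> {1..p-1}" then show "a' i = 0" using k0[of 0] by (cases "i = 0") (auto simp: a'_def)
    qed
    moreover have "(\<lambda>i. if i \<in> {Suc p..N} then k (i-1) else 0) \<in> Bq a'"
    proof -
      have "k p \<le> k (p-1) + K" if "p + 1 \<le> N"
      proof -
        have "p \<in> {2..N-1}" using that pN by auto
        then show ?thesis using k2[of p] by (simp add: mP_def)
      qed
      moreover have "1 \<le> k (i-1)" if "i \<in> {Suc p..N}" for i
      proof -
        have "i - 1 \<in> {1..N-1}" using that pN by auto
        then show ?thesis using k1[of "i-1"] by simp
      qed
      moreover have "k i \<le> k (i - 1)" if "i \<in> {Suc p..<N}" for i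
      proof -
        have "i \<in> {2..N-1}" "\<not> i < p" "i \<noteq> p" using that pN by auto
        then show ?thesis using k2[of i] by (simp add: mP_def)
      qed
      moreover have "a' (p-1) = k (p-1)" by (simp add: a'_def)
      ultimately show ?thesis unfolding Bq_def QS_def by auto
    qed
    ultimately show "\<psi> k \<in> Sigma A Bq" by (simp add: \<psi>_def a'_def)
    show "\<phi> (\<psi> k) = k"
    proof
      fix i show "\<phi> (\<psi> k) i = k i"
        using k0[of i] pN by (auto simp: \<phi>_def \<psi>_def)
    qed
  next
    show "Gk p K summable_on C" using summ by (simp add: C_def)
  next
    fix a show "finite (Bq a)" unfolding Bq_def by (rule QS_finite) simp
  qed
  have "infsum (\<lambda>a. f a * sum h (Bq a)) A = Rf N p s m j z K"
    by (simp add: Rf_def A_def f_def h_def Bq_def Qf_QS)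
  then show ?thesis using main by (simp add: C_def)
qed

lemma part2_eq:
  assumes p: "p \<in> {2..N}" and L: "PF_ok (j (p-1)) K (s (p-1)) (s p) L"
  shows "Rf N p s m j z K = (\<Sum>(c,sh,e)\<leftarrow>L. of_rat c * Brick (N-1) (sP p s e) (mP p m K) (jP p j sh) (wP p))"
proof -
  define C where "C = brick_idx (N-1) (mP p m K)"
  have sl: "(\<lambda>k. \<Sum>(c,sh,e)\<leftarrow>L. (of_rat c :: complex) * BS p sh e k) summable_on C \<and>
         infsum (\<lambda>k. \<Sum>(c,sh,e)\<leftarrow>L. (of_rat c :: complex) * BS p sh e k) C = (\<Sum>(c,sh,e)\<leftarrow>L. of_rat c * infsum (BS p sh e) C)"
    by (rule sl_summable2) (use BS_summable[OF p] in \<open>auto simp: C_def\<close>)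
  have Geq: "\<And>k. k \<in> C \<Longrightarrow> Gk p K k = (\<Sum>(c,sh,e)\<leftarrow>L. of_rat c * BS p sh e k)"
    using G_decomp[OF p L] by (simp add: C_def)
  have Gs: "Gk p K summable_on C"
    using sl summable_on_cong[of C "Gk p K", OF Geq] by blast
  have "Rf N p s m j z K = infsum (Gk p K) C" using Rf_G[OF p] Gs by (simp add: C_def)
  also have "\<dots> = infsum (\<lambda>k. \<Sum>(c,sh,e)\<leftarrow>L. (of_rat c :: complex) * BS p sh e k) C"
    by (rule infsum_cong) (rule Geq)
  also have "\<dots> = (\<Sum>(c,sh,e)\<leftarrow>L. of_rat c * infsum (BS p sh e) C)" using sl by blast
  also have "\<dots> = (\<Sum>(c,sh,e)\<leftarrow>L. of_rat c * Brick (N-1) (sP p s e) (mP p m K) (jP p j sh) (wP p))"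
    by (simp only: Brick_BS C_def)
  finally show ?thesis .
qed

end



lemma sum_split_at:
  fixes f :: "nat \<Rightarrow> 'a::comm_monoid_add"
  assumes "1 \<le> p" "p \<le> Suc N"
  shows "(\<Sum>i\<in>{1..N}. f i) = (\<Sum>i\<in>{1..p-1}. f i) + (\<Sum>i\<in>{p..N}. f i)"
proof -
  have "{1..N} = {1..p-1} \<union> {p..N}" using assms by auto
  moreover have "{1..p-1} \<inter> {p..N} = {}" by auto
  ultimately show ?thesis by (simp add: sum.union_disjoint)
qed

lemma sum_last2:
  fixes f :: "nat \<Rightarrow> 'a::comm_monoid_add"
  assumes "2 \<le> p"
  shows "(\<Sum>i\<in>{1..p-1}. f i) = (\<Sum>i\<in>{1..p-2}. f i) + f (p-1)"
proof -
  obtain k where k: "p = Suc (Suc k)" using assms by (metis add_2_eq_Suc le_Suc_ex)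
  show ?thesis by (simp add: k)
qed

lemma weight_bound:
  assumes p: "p \<in> {2..N}" and e: "max e 0 \<le> max (s (p-1)) 0 + max (s p) 0"
  shows "(\<Sum>i\<in>{1..N-1}. max (sP p s e i) 0) \<le> (\<Sum>i\<in>{1..N}. max (s i) 0)"
proof -
  have pN: "2 \<le> p" "p \<le> N" using p by auto
  have "(\<Sum>i\<in>{1..N-1}. max (sP p s e i) 0) = (\<Sum>i\<in>{1..p-1}. max (sP p s e i) 0) + (\<Sum>i\<in>{p..N-1}. max (sP p s e i) 0)"
    by (rule sum_split_at) (use pN in auto)
  also have "(\<Sum>i\<in>{1..p-1}. max (sP p s e i) 0) = (\<Sum>i\<in>{1..p-2}. max (sP p s e i) 0) + max (sP p s e (p-1)) 0"
    by (rule sum_last2[OF pN(1)])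
  also have "(\<Sum>i\<in>{1..p-2}. max (sP p s e i) 0) = (\<Sum>i\<in>{1..p-2}. max (s i) 0)"
    by (rule sum.cong) (auto simp: sP_def)
  also have "max (sP p s e (p-1)) 0 = max e 0" by (simp add: sP_def)
  also have "(\<Sum>i\<in>{p..N-1}. max (sP p s e i) 0) = (\<Sum>i\<in>{p..N-1}. max (s (Suc i)) 0)"
    by (rule sum.cong) (use pN in \<open>auto simp: sP_def\<close>)
  also have "\<dots> = (\<Sum>i\<in>{Suc p..N}. max (s i) 0)"
    using sum.shift_bounds_cl_Suc_ivl[of "\<lambda>i. max (s i) 0" p "N-1"] pN by simp
  finally have l: "(\<Sum>i\<in>{1..N-1}. max (sP p s e i) 0) = (\<Sum>i\<in>{1..p-2}. max (s i) 0) + max e 0 + (\<Sum>i\<in>{Suc p..N}. max (s i) 0)" .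
  have "(\<Sum>i\<in>{1..N}. max (s i) 0) = (\<Sum>i\<in>{1..p-1}. max (s i) 0) + (\<Sum>i\<in>{p..N}. max (s i) 0)"
    by (rule sum_split_at) (use pN in auto)
  also have "(\<Sum>i\<in>{1..p-1}. max (s i) 0) = (\<Sum>i\<in>{1..p-2}. max (s i) 0) + max (s (p-1)) 0"
    by (rule sum_last2[OF pN(1)])
  also have "(\<Sum>i\<in>{p..N}. max (s i) 0) = max (s p) 0 + (\<Sum>i\<in>{Suc p..N}. max (s i) 0)"
    by (rule sum.atLeast_Suc_atMost[OF pN(2)])
  finally have r: "(\<Sum>i\<in>{1..N}. max (s i) 0) = (\<Sum>i\<in>{1..p-2}. max (s i) 0) + max (s (p-1)) 0 + (max (s p) 0 + (\<Sum>i\<in>{Suc p..N}. max (s i) 0))" .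
  show ?thesis unfolding l r using e by linarith
qed

definition TP :: "nat \<Rightarrow> nat \<Rightarrow> (nat \<Rightarrow> int) \<Rightarrow> (nat \<Rightarrow> nat) \<Rightarrow> (nat \<Rightarrow> nat) \<Rightarrow> nat \<Rightarrow> (rat \<times> nat \<times> int) list \<Rightarrow> bterm" where
  "TP N p s m j K L = map (\<lambda>(c,sh,e). ([(c, \<lambda>_. 0)], (N-1, sP p s e, mP p m K, jP p j sh, SP p))) L"

lemma term_eval_TP:
  "term_eval N (TP N p s m j K L) z = (\<Sum>(c,sh,e)\<leftarrow>L. of_rat c * Brick (N-1) (sP p s e) (mP p m K) (jP p j sh) (\<lambda>i. \<Prod>l\<in>SP p i. z l))"
  by (induction L) (auto simp: TP_def term_eval_def lp_eval_def bd_eval_def bd_vars_def)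

lemma part2:
  assumes N: "N \<ge> 1" and m1: "m 1 = 0" and p: "p \<in> {2..N}"
  shows "\<exists>T. is_term_repr N (\<Sum>i\<in>{1..N}. max (s i) 0) T (\<lambda>z. Rf N p s m j z K)"
proof -
  obtain L where L: "PF_ok (j (p-1)) K (s (p-1)) (s p) L" using pf_exists by blast
  have pN: "2 \<le> p" "p \<le> N" using p by auto
  have ok: "bd_ok N b \<and> bd_weight b \<le> (\<Sum>i\<in>{1..N}. max (s i) 0)" if cb: "(c, b) \<in> set (TP N p s m j K L)" for c b
  proof -
    obtain c' sh e where she: "(c', sh, e) \<in> set L" and b: "b = (N-1, sP p s e, mP p m K, jP p j sh, SP p)"
      using cb by (auto simp: TP_def)
    have w: "max e 0 \<le> max (s (p-1)) 0 + max (s p) 0" using L she unfolding PF_ok_def by fastforce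
    have "\<forall>i\<in>{1..N-1}. SP p i \<subseteq> {1..N}" using pN by (auto simp: SP_def)
    moreover have "mP p m K 1 = 0" using pN m1 by (simp add: mP_def)
    ultimately have "bd_ok N b" by (simp add: bd_ok_def b)
    moreover have "bd_weight b \<le> (\<Sum>i\<in>{1..N}. max (s i) 0)"
      unfolding b bd_weight_def using weight_bound[OF p w] by simp
    ultimately show ?thesis by blast
  qed
  have rep: "(\<forall>(c, b)\<in>set (TP N p s m j K L). bd_defined b z) \<and> Rf N p s m j z K = term_eval N (TP N p s m j K L) z"
    if z: "z \<in> zdom N" for z
  proof -
    interpret setting N s m j z
      using z N by unfold_locales (auto simp: zdom_def)
    have wv: "(\<lambda>i. \<Prod>l\<in>SP p i. z l) = wP p" by (simp add: wP_def[abs_def])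
    have "bd_defined b z" if cb: "(c, b) \<in> set (TP N p s m j K L)" for c b
    proof -
      obtain sh e where b: "b = (N-1, sP p s e, mP p m K, jP p j sh, SP p)"
        using cb by (auto simp: TP_def)
      show ?thesis unfolding bd_defined_def b bd_vars_def using wP_1[OF p] wP_ge[OF p]
        by (simp add: wv)
    qed
    moreover have "Rf N p s m j z K = term_eval N (TP N p s m j K L) z"
      unfolding term_eval_TP wv using part2_eq[OF p L] .
    ultimately show ?thesis by blast
  qed
  show ?thesis
    unfolding is_term_repr_def using ok rep by blast
qed

theorem mainTheorem5:
  fixes N :: nat and s :: "nat \<Rightarrow> int" and m j :: "nat \<Rightarrow> nat"
  assumes "N \<ge> 1" and "m 1 = 0"
  shows "(\<forall>z\<in>zdom N.
            Brick N s m j z =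
              (\<Prod>i\<in>{1..N}. z i ^ j i) * La N s (\<lambda>i. inverse (z i))
              - (\<Sum>p\<in>{1..N}. (\<Prod>i\<in>{p..N}. z i ^ j i) * Qf N p s (j p) z * Brick (p - 1) s m j z)
              + (\<Sum>p\<in>{2..N}. of_int (eps (int (j (p - 1))) (int (j p + m p)))
                   * (\<Prod>i\<in>{p..N}. z i ^ j i)
                   * (\<Sum>k\<in>{min (j (p - 1)) (j p + m p) + 1 .. max (j (p - 1)) (j p + m p)}.
                        inverse (z p ^ k) * Rf N p s m j z k)))
       \<and> (\<forall>p\<in>{2..N}. \<forall>K::nat. \<exists>T. is_term_repr N (\<Sum>i\<in>{1..N}. max (s i) 0) T
                                        (\<lambda>z. Rf N p s m j z K))"
proof (intro conjI ballI allI)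
  fix z assume z: "z \<in> zdom N"
  interpret setting N s m j z
    using z assms(1) by unfold_locales (auto simp: zdom_def)
  show "Brick N s m j z =
              (\<Prod>i\<in>{1..N}. z i ^ j i) * La N s (\<lambda>i. inverse (z i))
              - (\<Sum>p\<in>{1..N}. (\<Prod>i\<in>{p..N}. z i ^ j i) * Qf N p s (j p) z * Brick (p - 1) s m j z)
              + (\<Sum>p\<in>{2..N}. of_int (eps (int (j (p - 1))) (int (j p + m p)))
                   * (\<Prod>i\<in>{p..N}. z i ^ j i)
                   * (\<Sum>k\<in>{min (j (p - 1)) (j p + m p) + 1 .. max (j (p - 1)) (j p + m p)}.
                        inverse (z p ^ k) * Rf N p s m j z k))"
    by (rule part1)
next
  fix p K assume p: "p \<in> {2..N}"
  show "\<exists>T. is_term_repr N (\<Sum>i\<in>{1..N}. max (s i) 0) T (\<lambda>z. Rf N p s m j z K)"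
    using part2[of N m p s j K] assms p by blast
qed


end
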